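(* Let $H$ be a $2$-transitive affine permutation group of degree $2^6$ on a set $\Omega$, and let $1\ne K\unlhd H$. Assume that $K_\alpha\ne 1$ for $\alpha\in\Omega$, and $K$ is imprimitive on $\Omega$. Then (1) $K_\alpha\cong\mathbb{Z}_s$ with $s\in\{3,7\}$, and there is $x\in H_\alpha$ such that $K_\alpha\langle x\rangle\cong\mathbb{Z}_{21}$; and (2) for each $x\in H_\alpha$ with $K_\alpha\langle x\rangle\cong\mathbb{Z}_{21}$, the subgroup $K\langle x\rangle$ is primitive on $\Omega$.
   Context: An affine permutation group of degree $2^6$ is a permutation group on a set of size $2^6$ having a regular normal subgroup isomorphic to $\mathbb{Z}_2^6$. $H_\alpha$, $K_\alpha$ denote point stabilizers. *)

theory Defs
  imports "HOL-Algebra.Algebra"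
begin

definition perm_gr :: "'a set \<Rightarrow> ('a \<Rightarrow> 'a) set \<Rightarrow> ('a \<Rightarrow> 'a) monoid" where
  "perm_gr \<Omega> S = (BijGroup \<Omega>)\<lparr>carrier := S\<rparr>"

definition perm_group :: "'a set \<Rightarrow> ('a \<Rightarrow> 'a) set \<Rightarrow> bool" where
  "perm_group \<Omega> G \<longleftrightarrow> subgroup G (BijGroup \<Omega>)"

definition pstab :: "('a \<Rightarrow> 'a) set \<Rightarrow> 'a \<Rightarrow> ('a \<Rightarrow> 'a) set" where
  "pstab G \<alpha> = {g \<in> G. g \<alpha> = \<alpha>}"

text \<open>subgroup generated by a set of permutations, e.g. K<x> = gen_perm Omega (insert x K)\<close>
definition gen_perm :: "'a set \<Rightarrow> ('a \<Rightarrow> 'a) set \<Rightarrow> ('a \<Rightarrow> 'a) set" where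
  "gen_perm \<Omega> S = generate (BijGroup \<Omega>) S"

definition transitive_on :: "'a set \<Rightarrow> ('a \<Rightarrow> 'a) set \<Rightarrow> bool" where
  "transitive_on \<Omega> G \<longleftrightarrow> (\<forall>\<alpha>\<in>\<Omega>. \<forall>\<beta>\<in>\<Omega>. \<exists>g\<in>G. g \<alpha> = \<beta>)"

definition two_transitive_on :: "'a set \<Rightarrow> ('a \<Rightarrow> 'a) set \<Rightarrow> bool" where
  "two_transitive_on \<Omega> G \<longleftrightarrow>
     (\<forall>\<alpha>\<in>\<Omega>. \<forall>\<beta>\<in>\<Omega>. \<forall>\<gamma>\<in>\<Omega>. \<forall>\<delta>\<in>\<Omega>. \<alpha> \<noteq> \<beta> \<longrightarrow> \<gamma> \<noteq> \<delta> \<longrightarrow>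
        (\<exists>g\<in>G. g \<alpha> = \<gamma> \<and> g \<beta> = \<delta>))"

definition regular_on :: "'a set \<Rightarrow> ('a \<Rightarrow> 'a) set \<Rightarrow> bool" where
  "regular_on \<Omega> G \<longleftrightarrow> transitive_on \<Omega> G \<and> (\<forall>\<alpha>\<in>\<Omega>. pstab G \<alpha> = {\<one>\<^bsub>BijGroup \<Omega>\<^esub>})"

definition is_block :: "'a set \<Rightarrow> ('a \<Rightarrow> 'a) set \<Rightarrow> 'a set \<Rightarrow> bool" where
  "is_block \<Omega> G B \<longleftrightarrow> B \<subseteq> \<Omega> \<and> B \<noteq> {} \<and> (\<forall>g\<in>G. g ` B = B \<or> g ` B \<inter> B = {})"

definition primitive_on :: "'a set \<Rightarrow> ('a \<Rightarrow> 'a) set \<Rightarrow> bool" where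
  "primitive_on \<Omega> G \<longleftrightarrow> transitive_on \<Omega> G \<and>
     (\<forall>B. is_block \<Omega> G B \<longrightarrow> card B = 1 \<or> B = \<Omega>)"

definition imprimitive_on :: "'a set \<Rightarrow> ('a \<Rightarrow> 'a) set \<Rightarrow> bool" where
  "imprimitive_on \<Omega> G \<longleftrightarrow> transitive_on \<Omega> G \<and> \<not> primitive_on \<Omega> G"

definition Z2_6 :: "(nat \<Rightarrow> int) monoid" where
  "Z2_6 = product_group {..<6} (\<lambda>_. integer_mod_group 2)"

definition affine_perm_group_2_6 :: "'a set \<Rightarrow> ('a \<Rightarrow> 'a) set \<Rightarrow> bool" where
  "affine_perm_group_2_6 \<Omega> H \<longleftrightarrow> finite \<Omega> \<and> card \<Omega> = 2^6 \<and> perm_group \<Omega> H \<and>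
     (\<exists>N. N \<lhd> perm_gr \<Omega> H \<and> regular_on \<Omega> N \<and> perm_gr \<Omega> N \<cong> Z2_6)"

end

theory Submission
  imports Defs
begin

lemma divs64: "(c::nat) dvd 64 \<Longrightarrow> \<exists>i\<le>6. c = 2^i"
proof -
  assume "c dvd 64"
  then have "c dvd 2^6" by simp
  then show ?thesis using divides_primepow_nat[of 2 c 6] by simp
qed

lemma i6_cases: "(i::nat) \<le> 6 \<Longrightarrow> i = 0 \<or> i = 1 \<or> i = 2 \<or> i = 3 \<or> i = 4 \<or> i = 5 \<or> i = 6"
  by linarith

lemma arith1:
  assumes a: "(c::nat) dvd 64" "1 < c" "c < 64" "(k::nat) dvd 63" "k dvd c - 1"
  shows "k = 1 \<or> k = 3 \<or> k = 7"
proof -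
  obtain i where i: "i \<le> 6" "c = 2^i" using divs64[OF a(1)] by blast
  have "c = 2 \<or> c = 4 \<or> c = 8 \<or> c = 16 \<or> c = 32" using i6_cases[OF i(1)] i(2) a(2,3) by auto
  then have "k dvd 1 \<or> k dvd 3 \<or> k dvd 7 \<or> k dvd 15 \<or> k dvd 31" using a(5) by auto
  moreover have "gcd (15::nat) 63 = 3" "gcd (31::nat) 63 = 1" by (simp_all add: gcd_non_0_nat)
  ultimately have "k dvd 1 \<or> k dvd 3 \<or> k dvd 7" using a(4) by (metis gcd_greatest)
  moreover have "Factorial_Ring.prime (3::nat)" "Factorial_Ring.prime (7::nat)" by simp_all
  ultimately show ?thesis using prime_nat_iff by auto
qed

lemma arith2:
  assumes a: "(f::nat) dvd 64" "k dvd f - 1" "q dvd 64 - f" "(k = 3 \<and> q = 7) \<or> (k = 7 \<and> q = (3::nat))"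
  shows "f = 1 \<or> f = 64"
proof -
  obtain i where i: "i \<le> 6" "f = 2^i" using divs64[OF a(1)] by blast
  then have "f = 1 \<or> f = 2 \<or> f = 4 \<or> f = 8 \<or> f = 16 \<or> f = 32 \<or> f = 64" using i6_cases[OF i(1)] by auto
  then show ?thesis using a(2-4) by auto
qed

lemma arith3:
  assumes a: "(f::nat) dvd 64" "21 dvd f - 1"
  shows "f = 1 \<or> f = 64"
proof -
  obtain i where i: "i \<le> 6" "f = 2^i" using divs64[OF a(1)] by blast
  then have "f = 1 \<or> f = 2 \<or> f = 4 \<or> f = 8 \<or> f = 16 \<or> f = 32 \<or> f = 64" using i6_cases[OF i(1)] by auto
  then show ?thesis using a(2) by auto
qed

lemma arith4:
  assumes a: "hc = 63 * t" "hc = (oo::nat) * c" "1 \<le> oo" "oo \<le> k - 1" "k = 3 \<or> k = (7::nat)"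
  shows "(k = 3 \<longrightarrow> 7 dvd c) \<and> (k = 7 \<longrightarrow> 3 dvd c)"
proof -
  have d: "63 dvd oo * c" using a(1,2) by simp
  have "oo \<le> 6" using a(4,5) by auto
  then have "oo = 1 \<or> oo = 2 \<or> oo = 3 \<or> oo = 4 \<or> oo = 5 \<or> oo = 6" using a(3) by linarith
  then show ?thesis using d a(4,5) by (elim disjE; presburger)
qed

lemma div21: assumes "(d::nat) dvd 21" "\<not> d dvd 3" "\<not> d dvd 7" shows "d = 21"
proof -
  have "d dvd 3 * 7" using assms(1) by simp
  then obtain b c where bc: "d = b * c" "b dvd 3" "c dvd 7" using division_decomp by blast
  have p: "Factorial_Ring.prime (3::nat)" "Factorial_Ring.prime (7::nat)" by simp_all
  have "b = 1 \<or> b = 3" using bc(2) p(1) prime_nat_iff by blast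
  moreover have "c = 1 \<or> c = 7" using bc(3) p(2) prime_nat_iff by blast
  ultimately show ?thesis using bc(1) assms(2,3) by auto
qed

lemma s3: "{i \<in> {0..<21::int}. (3 * i) mod 21 = 0} = {0,7,14}"
  by (auto; presburger)
lemma s7: "{i \<in> {0..<21::int}. (7 * i) mod 21 = 0} = {0,3,6,9,12,15,18}"
  by (auto; presburger)

locale pset = group G for G :: "('a \<Rightarrow> 'a) monoid" (structure) +
  fixes \<Omega> :: "'a set"
  assumes G_def: "G = BijGroup \<Omega>"
  and fin\<Omega>: "finite \<Omega>"
begin

lemma carrG: "carrier G = Bij \<Omega>"
  by (simp add: G_def BijGroup_def)

lemma mult_apply: "g \<in> carrier G \<Longrightarrow> h \<in> carrier G \<Longrightarrow> \<beta> \<in> \<Omega> \<Longrightarrow> (g \<otimes> h) \<beta> = g (h \<beta>)"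
  by (simp add: G_def BijGroup_def compose_def)

lemma one_apply: "\<beta> \<in> \<Omega> \<Longrightarrow> \<one> \<beta> = \<beta>"
  by (simp add: G_def BijGroup_def)

lemma in_Omega: "g \<in> carrier G \<Longrightarrow> \<beta> \<in> \<Omega> \<Longrightarrow> g \<beta> \<in> \<Omega>"
  by (auto simp: carrG Bij_def bij_betw_def)

lemma inj_Omega: "g \<in> carrier G \<Longrightarrow> inj_on g \<Omega>"
  by (auto simp: carrG Bij_def bij_betw_def)

lemma img_Omega: "g \<in> carrier G \<Longrightarrow> g ` \<Omega> = \<Omega>"
  by (auto simp: carrG Bij_def bij_betw_def)

lemma inv_apply1: "g \<in> carrier G \<Longrightarrow> \<beta> \<in> \<Omega> \<Longrightarrow> (inv g) (g \<beta>) = \<beta>"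
  by (metis in_Omega inv_closed l_inv mult_apply one_apply)

lemma inv_apply2: "g \<in> carrier G \<Longrightarrow> \<beta> \<in> \<Omega> \<Longrightarrow> g ((inv g) \<beta>) = \<beta>"
  by (metis in_Omega inv_closed r_inv mult_apply one_apply)

lemma ext_eq: "g \<in> carrier G \<Longrightarrow> h \<in> carrier G \<Longrightarrow> (\<And>\<beta>. \<beta> \<in> \<Omega> \<Longrightarrow> g \<beta> = h \<beta>) \<Longrightarrow> g = h"
  by (metis Bij_def IntD1 carrG extensionalityI)

lemma fix_all_one: "g \<in> carrier G \<Longrightarrow> (\<And>\<beta>. \<beta> \<in> \<Omega> \<Longrightarrow> g \<beta> = \<beta>) \<Longrightarrow> g = \<one>"
  by (rule ext_eq) (auto simp: one_apply)

lemma fin_carrier: "finite (carrier G)"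
proof -
  have "carrier G \<subseteq> extensional_funcset \<Omega> \<Omega>"
    by (auto simp: carrG Bij_def bij_betw_def extensional_def)
  moreover have "finite (extensional_funcset \<Omega> \<Omega>)"
    using fin\<Omega> by (simp add: finite_PiE)
  ultimately show ?thesis by (rule finite_subset)
qed

lemma fin_sub: "S \<subseteq> carrier G \<Longrightarrow> finite S"
  using fin_carrier finite_subset by blast

lemma sgM: "subgroup S G \<Longrightarrow> x \<in> S \<Longrightarrow> y \<in> S \<Longrightarrow> x \<otimes> y \<in> S" by (rule subgroup.m_closed)
lemma sgI: "subgroup S G \<Longrightarrow> x \<in> S \<Longrightarrow> inv x \<in> S" by (rule subgroup.m_inv_closed)
lemma sg1: "subgroup S G \<Longrightarrow> \<one> \<in> S" by (rule subgroup.one_closed)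
lemma sgC: "subgroup S G \<Longrightarrow> x \<in> S \<Longrightarrow> x \<in> carrier G" by (rule subgroup.mem_carrier)

lemma orbit_mem_closed:
  assumes S: "subgroup S G" and Y: "Y \<subseteq> \<Omega>"
    and x: "x \<in> Y" and y: "y \<in> (\<lambda>s. s x) ` S"
  shows "(\<lambda>s. s y) ` S \<subseteq> (\<lambda>s. s x) ` S" "x \<in> (\<lambda>s. s y) ` S"
proof -
  obtain t where t: "t \<in> S" "y = t x" using y by blast
  have tc: "t \<in> carrier G" using S t(1) by (rule subgroup.mem_carrier)
  have x\<Omega>: "x \<in> \<Omega>" using x Y by blast
  show "(\<lambda>s. s y) ` S \<subseteq> (\<lambda>s. s x) ` S"
  proof
    fix z assume "z \<in> (\<lambda>s. s y) ` S"
    then obtain u where u: "u \<in> S" "z = u y" by blast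
    have uc: "u \<in> carrier G" using S u(1) by (rule subgroup.mem_carrier)
    have "(u \<otimes> t) x = u (t x)" by (rule mult_apply[OF uc tc x\<Omega>])
    then have e: "z = (u \<otimes> t) x" using u t by simp
    have "u \<otimes> t \<in> S" using S u(1) t(1) by (rule subgroup.m_closed)
    then show "z \<in> (\<lambda>s. s x) ` S" using e by blast
  qed
  have e: "x = (inv t) y" using inv_apply1[OF tc x\<Omega>] t by simp
  have "inv t \<in> S" using S t(1) by (rule subgroup.m_inv_closed)
  then show "x \<in> (\<lambda>s. s y) ` S" using e by blast
qed

lemma free_dvd:
  assumes S: "subgroup S G" and Y: "Y \<subseteq> \<Omega>" and cl: "\<And>s x. s \<in> S \<Longrightarrow> x \<in> Y \<Longrightarrow> s x \<in> Y"
    and free: "\<And>s x. s \<in> S \<Longrightarrow> x \<in> Y \<Longrightarrow> s x = x \<Longrightarrow> s = \<one>"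
  shows "card S dvd card Y"
proof -
  define Orb where "Orb x = (\<lambda>s. s x) ` S" for x
  define C where "C = Orb ` Y"
  have finX: "finite Y" using Y fin\<Omega> by (rule finite_subset)
  have OX: "Orb x \<subseteq> Y" if "x \<in> Y" for x using cl that unfolding Orb_def by blast
  have xOrb: "x \<in> Orb x" if "x \<in> Y" for x
  proof -
    have "x \<in> \<Omega>" using that Y by blast
    then have "\<one> x = x" by (rule one_apply)
    moreover have "\<one> \<in> S" using S by (rule subgroup.one_closed)
    ultimately show ?thesis unfolding Orb_def by (metis image_eqI)
  qed
  have cardOrb: "card (Orb x) = card S" if x: "x \<in> Y" for x
  proof -
    have x\<Omega>: "x \<in> \<Omega>" using x Y by blast
    have "inj_on (\<lambda>s. s x) S"
    proof (rule inj_onI)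
      fix s t assume st: "s \<in> S" "t \<in> S" "s x = t x"
      have sc: "s \<in> carrier G" using S st(1) by (rule subgroup.mem_carrier)
      have tc: "t \<in> carrier G" using S st(2) by (rule subgroup.mem_carrier)
      have "(inv t \<otimes> s) x = (inv t) (s x)" by (rule mult_apply[OF inv_closed[OF tc] sc x\<Omega>])
      also have "\<dots> = x" using st(3) inv_apply1[OF tc x\<Omega>] by simp
      finally have fx: "(inv t \<otimes> s) x = x" .
      have "inv t \<in> S" using S st(2) by (rule subgroup.m_inv_closed)
      then have "inv t \<otimes> s \<in> S" using sgM[OF S _ st(1)] by blast
      then have e: "inv t \<otimes> s = \<one>" using free x fx by blast
      have "s = t \<otimes> (inv t \<otimes> s)" using sc tc by (simp add: m_assoc[symmetric])
      then show "s = t" using e tc by simp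
    qed
    then show ?thesis unfolding Orb_def by (simp add: card_image)
  qed
  have U: "\<Union>C = Y" using OX xOrb unfolding C_def by blast
  have disj: "\<forall>c1\<in>C. \<forall>c2\<in>C. c1 \<noteq> c2 \<longrightarrow> c1 \<inter> c2 = {}"
  proof (intro ballI impI)
    fix c1 c2 assume c: "c1 \<in> C" "c2 \<in> C" "c1 \<noteq> c2"
    obtain x y where xy: "x \<in> Y" "y \<in> Y" "c1 = Orb x" "c2 = Orb y" using c unfolding C_def by blast
    show "c1 \<inter> c2 = {}"
    proof (rule ccontr)
      assume "c1 \<inter> c2 \<noteq> {}"
      then obtain z where z: "z \<in> Orb x" "z \<in> Orb y" using xy by blast
      have zX: "z \<in> Y" using z(1) OX[OF xy(1)] by blast
      have 1: "Orb z \<subseteq> Orb x" "x \<in> Orb z" using orbit_mem_closed[OF S Y xy(1)] z(1) unfolding Orb_def by blast+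
      have 2: "Orb z \<subseteq> Orb y" "y \<in> Orb z" using orbit_mem_closed[OF S Y xy(2)] z(2) unfolding Orb_def by blast+
      have 3: "Orb x \<subseteq> Orb z" using orbit_mem_closed(1)[OF S Y zX] 1(2) unfolding Orb_def by blast
      have 4: "Orb y \<subseteq> Orb z" using orbit_mem_closed(1)[OF S Y zX] 2(2) unfolding Orb_def by blast
      have "Orb x = Orb y" using 1 2 3 4 by blast
      then show False using xy c by simp
    qed
  qed
  have "card S * card C = card (\<Union>C)"
  proof (rule card_partition)
    show "finite C" using finX unfolding C_def by simp
    show "finite (\<Union>C)" using U finX by simp
    show "\<And>c. c \<in> C \<Longrightarrow> card c = card S" using cardOrb unfolding C_def by blast
    show "\<And>c1 c2. c1 \<in> C \<Longrightarrow> c2 \<in> C \<Longrightarrow> c1 \<noteq> c2 \<Longrightarrow> c1 \<inter> c2 = {}" using disj by blast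
  qed
  then show ?thesis using U by (metis dvd_triv_left)
qed


lemma fiber_card:
  assumes S: "subgroup S G" and T: "subgroup T G" and TS: "T \<subseteq> S"
    and f: "\<And>h h'. h \<in> S \<Longrightarrow> h' \<in> S \<Longrightarrow> f h = f h' \<longleftrightarrow> inv h \<otimes> h' \<in> T"
  shows "card S = card (f ` S) * card T"
proof -
  define F where "F y = {h'\<in>S. f h' = y}" for y
  define C where "C = F ` (f ` S)"
  have finS: "finite S" by (rule fin_sub[OF subgroup.subset[OF S]])
  have Fh: "F (f h) = (\<lambda>t. h \<otimes> t) ` T" if h: "h \<in> S" for h
  proof
    have hc: "h \<in> carrier G" using S h by (rule subgroup.mem_carrier)
    show "F (f h) \<subseteq> (\<lambda>t. h \<otimes> t) ` T"
    proof
      fix h' assume "h' \<in> F (f h)"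
      then have h': "h' \<in> S" "f h' = f h" unfolding F_def by auto
      have h'c: "h' \<in> carrier G" using S h'(1) by (rule subgroup.mem_carrier)
      have "inv h \<otimes> h' \<in> T" using f[OF h h'(1)] h'(2) by simp
      moreover have "h' = h \<otimes> (inv h \<otimes> h')" using hc h'c by (simp add: m_assoc[symmetric])
      ultimately show "h' \<in> (\<lambda>t. h \<otimes> t) ` T" by blast
    qed
    show "(\<lambda>t. h \<otimes> t) ` T \<subseteq> F (f h)"
    proof
      fix x assume "x \<in> (\<lambda>t. h \<otimes> t) ` T"
      then obtain t where t: "t \<in> T" "x = h \<otimes> t" by blast
      have tc: "t \<in> carrier G" using T t(1) by (rule subgroup.mem_carrier)
      have tS: "t \<in> S" using TS t(1) by blast
      have xS: "x \<in> S" unfolding t(2) using S h tS by (rule subgroup.m_closed)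
      have "inv h \<otimes> x = t" using t hc tc by (simp add: m_assoc[symmetric])
      then have "f h = f x" using f[OF h xS] t by simp
      then show "x \<in> F (f h)" using xS unfolding F_def by simp
    qed
  qed
  have cardF: "card (F (f h)) = card T" if h: "h \<in> S" for h
  proof -
    have hc: "h \<in> carrier G" using S h by (rule subgroup.mem_carrier)
    have "inj_on (\<lambda>t. h \<otimes> t) T"
    proof (rule inj_onI)
      fix x y assume xy: "x \<in> T" "y \<in> T" "h \<otimes> x = h \<otimes> y"
      have cx: "x \<in> carrier G" "y \<in> carrier G" using xy subgroup.mem_carrier[OF T] by auto
      show "x = y" by (rule l_cancel[OF xy(3) cx hc])
    qed
    then show ?thesis using Fh[OF h] by (simp add: card_image)
  qed
  have UC: "\<Union>C = S" unfolding C_def F_def by blast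
  have "card T * card C = card (\<Union>C)"
  proof (rule card_partition)
    show "finite C" using finS unfolding C_def by simp
    show "finite (\<Union>C)" using UC finS by simp
    show "\<And>c. c \<in> C \<Longrightarrow> card c = card T" using cardF unfolding C_def by blast
    show "c1 \<inter> c2 = {}" if c: "c1 \<in> C" "c2 \<in> C" "c1 \<noteq> c2" for c1 c2
    proof -
      obtain y1 y2 where y: "c1 = F y1" "c2 = F y2" using c unfolding C_def by blast
      then have "y1 \<noteq> y2" using c by blast
      then show ?thesis unfolding y F_def by blast
    qed
  qed
  moreover have "card C = card (f ` S)"
  proof -
    have "inj_on F (f ` S)"
    proof (rule inj_onI)
      fix y1 y2 assume y: "y1 \<in> f ` S" "y2 \<in> f ` S" "F y1 = F y2"
      then obtain h where h: "h \<in> S" "y1 = f h" by blast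
      then have "h \<in> F y1" unfolding F_def by simp
      then have "h \<in> F y2" using y by simp
      then show "y1 = y2" using h unfolding F_def by simp
    qed
    then show ?thesis unfolding C_def by (simp add: card_image)
  qed
  ultimately show ?thesis using UC by (simp add: mult.commute)
qed

lemma sub_dvd:
  assumes I: "subgroup I G" and J: "subgroup J G" and IJ: "I \<subseteq> J"
  shows "card I dvd card J"
proof -
  have "group (G\<lparr>carrier := J\<rparr>)" using J is_group by (rule subgroup.subgroup_is_group)
  moreover have "subgroup I (G\<lparr>carrier := J\<rparr>)" using I J IJ by (rule subgroup_incl)
  ultimately have "card (rcosets\<^bsub>G\<lparr>carrier := J\<rparr>\<^esub> I) * card I = order (G\<lparr>carrier := J\<rparr>)"
    by (rule group.lagrange)
  moreover have "order (G\<lparr>carrier := J\<rparr>) = card J" by (simp add: order_def)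
  ultimately have "card (rcosets\<^bsub>G\<lparr>carrier := J\<rparr>\<^esub> I) * card I = card J" by simp
  then show ?thesis by (metis dvd_triv_right)
qed

lemma cauchy:
  assumes S: "subgroup S G" and p: "Factorial_Ring.prime (p::nat)" and d: "p dvd card S"
  shows "\<exists>y\<in>S. ord y = p"
proof -
  define GS where "GS = G\<lparr>carrier := S\<rparr>"
  have gGS: "group GS" unfolding GS_def using S is_group by (rule subgroup.subgroup_is_group)
  obtain m where m: "card S = p ^ 1 * m" using d by auto
  have oGS: "order GS = p ^ 1 * m" using m unfolding GS_def order_def by simp
  have "S \<subseteq> carrier G" by (rule subgroup.subset[OF S])
  then have finGS: "finite (carrier GS)" unfolding GS_def using fin_sub by simp
  obtain P where P: "subgroup P GS" "card P = p ^ 1"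
    using sylow_thm[OF p gGS oGS finGS] by blast
  have PG: "subgroup P G" using S P(1) unfolding GS_def by (rule incl_subgroup)
  have PS: "P \<subseteq> S" using subgroup.subset[OF P(1)] unfolding GS_def by simp
  have "card P \<ge> 2" using P(2) p prime_ge_2_nat by simp
  have "\<exists>y\<in>P. y \<noteq> \<one>"
  proof (rule ccontr)
    assume "\<not> ?thesis"
    then have "P \<subseteq> {\<one>}" by blast
    then have "card P \<le> card {\<one>}" by (rule card_mono[rotated]) simp
    then show False using \<open>card P \<ge> 2\<close> by simp
  qed
  then obtain y where y: "y \<in> P" "y \<noteq> \<one>" by blast
  have yc: "y \<in> carrier G" using PG y(1) by (rule subgroup.mem_carrier)
  have gsub: "generate G {y} \<subseteq> P" using y(1) by (intro generate_subgroup_incl[OF _ PG]) simp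
  have "card (generate G {y}) dvd card P"
    by (rule sub_dvd[OF generate_is_subgroup PG gsub]) (simp add: yc)
  then have "ord y dvd p" using P(2) generate_pow_card[OF yc] by simp
  moreover have "ord y \<noteq> 1" using ord_eq_1[OF yc] y(2) by simp
  ultimately have "ord y = p" using p prime_nat_iff by blast
  then show ?thesis using y PS by blast
qed

lemma cyclic_iso:
  assumes z: "z \<in> carrier G" and n: "ord z = n" "n > 0"
  shows "G\<lparr>carrier := generate G {z}\<rparr> \<cong> integer_mod_group n"
proof -
  define GS where "GS = G\<lparr>carrier := generate G {z}\<rparr>"
  define \<phi> where "\<phi> i = z [^] (i::int)" for i
  have gen: "generate G {z} = range (\<lambda>k::int. z [^] k)" using generate_pow[OF z] by auto
  have eqv: "\<phi> a = \<phi> b \<longleftrightarrow> int n dvd (b - a)" for a b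
    unfolding \<phi>_def using int_pow_eq[OF z] n by simp
  have carZ: "carrier (integer_mod_group n) = {0..<int n}" using n by (simp add: carrier_integer_mod_group)
  have "\<phi> \<in> iso (integer_mod_group n) GS"
  proof (unfold iso_def, intro CollectI conjI)
    show "\<phi> \<in> hom (integer_mod_group n) GS"
    proof (rule homI)
      fix i assume "i \<in> carrier (integer_mod_group n)"
      show "\<phi> i \<in> carrier GS" unfolding GS_def \<phi>_def gen by simp
    next
      fix i j assume "i \<in> carrier (integer_mod_group n)" "j \<in> carrier (integer_mod_group n)"
      have "\<phi> ((i + j) mod int n) = \<phi> (i + j)"
        unfolding eqv by (metis mod_eq_dvd_iff mod_mod_trivial)
      also have "\<dots> = \<phi> i \<otimes> \<phi> j" unfolding \<phi>_def using z by (simp add: int_pow_mult)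
      finally show "\<phi> (i \<otimes>\<^bsub>integer_mod_group n\<^esub> j) = \<phi> i \<otimes>\<^bsub>GS\<^esub> \<phi> j"
        unfolding GS_def by simp
    qed
    show "bij_betw \<phi> (carrier (integer_mod_group n)) (carrier GS)"
    proof (unfold bij_betw_def, intro conjI)
      show "inj_on \<phi> (carrier (integer_mod_group n))"
      proof (rule inj_onI)
        fix a b assume ab: "a \<in> carrier (integer_mod_group n)" "b \<in> carrier (integer_mod_group n)" "\<phi> a = \<phi> b"
        then have "int n dvd (b - a)" using eqv by simp
        then have "b mod int n = a mod int n" by (simp add: mod_eq_dvd_iff)
        then show "a = b" using ab(1,2) carZ by simp
      qed
      show "\<phi> ` carrier (integer_mod_group n) = carrier GS"
      proof
        show "\<phi> ` carrier (integer_mod_group n) \<subseteq> carrier GS" unfolding GS_def \<phi>_def gen by auto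
        show "carrier GS \<subseteq> \<phi> ` carrier (integer_mod_group n)"
        proof
          fix x assume "x \<in> carrier GS"
          then obtain k where k: "x = \<phi> k" unfolding GS_def gen \<phi>_def by auto
          have "\<phi> k = \<phi> (k mod int n)" unfolding eqv by (metis mod_eq_dvd_iff mod_mod_trivial)
          moreover have "k mod int n \<in> carrier (integer_mod_group n)" using carZ n by simp
          ultimately show "x \<in> \<phi> ` carrier (integer_mod_group n)" using k by blast
        qed
      qed
    qed
  qed
  then have "integer_mod_group n \<cong> GS" by (rule is_isoI)
  then show ?thesis unfolding GS_def by (rule group.iso_sym[OF group_integer_mod_group])
qed


lemma conj_apply:
  assumes g: "g \<in> carrier G" and n: "n \<in> carrier G" and \<beta>: "\<beta> \<in> \<Omega>" and ga: "g \<beta> = \<beta>"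
    and \<gamma>: "\<gamma> \<in> \<Omega>"
  shows "(g \<otimes> n \<otimes> inv g) (g \<gamma>) = g (n \<gamma>)"
  using g n \<gamma> by (simp add: mult_apply inv_apply1 in_Omega)

lemma conj_apply_fix:
  assumes g: "g \<in> carrier G" and n: "n \<in> carrier G" and \<beta>: "\<beta> \<in> \<Omega>" and ga: "g \<beta> = \<beta>"
  shows "(g \<otimes> n \<otimes> inv g) \<beta> = g (n \<beta>)"
  using conj_apply[OF g n \<beta> ga \<beta>] ga by simp

lemma pstab_subgroup:
  assumes S: "subgroup S G" and a: "a \<in> \<Omega>"
  shows "subgroup (pstab S a) G"
proof (rule subgroupI)
  show "pstab S a \<subseteq> carrier G" using subgroup.subset[OF S] unfolding pstab_def by blast
  have "\<one> \<in> pstab S a" using subgroup.one_closed[OF S] one_apply[OF a] unfolding pstab_def by simp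
  then show "pstab S a \<noteq> {}" by blast
  fix x y assume x: "x \<in> pstab S a" and y: "y \<in> pstab S a"
  have xS: "x \<in> S" "x a = a" "y \<in> S" "y a = a" using x y unfolding pstab_def by auto
  have xc: "x \<in> carrier G" "y \<in> carrier G" using sgC[OF S xS(1)] sgC[OF S xS(3)] by auto
  have "(inv x) (x a) = a" using inv_apply1[OF xc(1) a] .
  then have "(inv x) a = a" using xS by simp
  then show "inv x \<in> pstab S a" using sgI[OF S xS(1)] unfolding pstab_def by simp
  have "(x \<otimes> y) a = a" using mult_apply[OF xc a] xS by simp
  then show "x \<otimes> y \<in> pstab S a" using sgM[OF S xS(1) xS(3)] unfolding pstab_def by simp
qed

lemma linv_assoc [simp]: "g \<in> carrier G \<Longrightarrow> x \<in> carrier G \<Longrightarrow> inv g \<otimes> (g \<otimes> x) = x"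
  by (simp add: m_assoc[symmetric])
lemma rinv_assoc [simp]: "g \<in> carrier G \<Longrightarrow> x \<in> carrier G \<Longrightarrow> g \<otimes> (inv g \<otimes> x) = x"
  by (simp add: m_assoc[symmetric])

lemma pow_ord_mult: "x \<in> carrier G \<Longrightarrow> x [^] (ord x * m) = \<one>"
  by (simp add: nat_pow_pow[symmetric])

lemma pow_ord_mult_plus: "x \<in> carrier G \<Longrightarrow> x [^] (ord x * m + r) = x [^] r"
  by (simp add: nat_pow_mult[symmetric] pow_ord_mult)

lemma comm_pow: "x \<in> carrier G \<Longrightarrow> y \<in> carrier G \<Longrightarrow> x \<otimes> y = y \<otimes> x \<Longrightarrow> x \<otimes> y [^] (n::nat) = y [^] n \<otimes> x"
proof (induction n)
  case 0 then show ?case by simp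
next
  case (Suc n)
  have "x \<otimes> y [^] Suc n = (x \<otimes> y [^] n) \<otimes> y" using Suc.prems by (simp add: m_assoc)
  also have "\<dots> = y [^] n \<otimes> (x \<otimes> y)" using Suc by (simp add: m_assoc)
  also have "\<dots> = y [^] Suc n \<otimes> x" using Suc.prems by (simp add: m_assoc)
  finally show ?case .
qed

lemma iso21_facts:
  assumes L: "subgroup L G" and iso: "G\<lparr>carrier := L\<rparr> \<cong> integer_mod_group 21"
  shows "card L = 21" "\<And>a b. a \<in> L \<Longrightarrow> b \<in> L \<Longrightarrow> a \<otimes> b = b \<otimes> a"
    "\<And>m. m = 3 \<or> m = 7 \<Longrightarrow> card {l \<in> L. l [^] (m::nat) = \<one>} = m"
proof -
  define GL where "GL = G\<lparr>carrier := L\<rparr>"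
  have gGL: "group GL" unfolding GL_def using L is_group by (rule subgroup.subgroup_is_group)
  obtain \<psi> where psi: "\<psi> \<in> iso GL (integer_mod_group 21)" using iso unfolding is_iso_def GL_def by blast
  have hom: "\<psi> \<in> hom GL (integer_mod_group 21)" and bij: "bij_betw \<psi> L {0..<21}"
    using psi unfolding iso_def GL_def by (auto simp: carrier_integer_mod_group)
  have inj: "inj_on \<psi> L" and surj: "\<psi> ` L = {0..<21}" using bij unfolding bij_betw_def by auto
  show "card L = 21" using bij_betw_same_card[OF bij] by simp
  have hmul: "\<psi> (a \<otimes> b) = (\<psi> a + \<psi> b) mod 21" if "a \<in> L" "b \<in> L" for a b
    using hom_mult[OF hom, of a b] that unfolding GL_def by simp
  show "\<And>a b. a \<in> L \<Longrightarrow> b \<in> L \<Longrightarrow> a \<otimes> b = b \<otimes> a"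
  proof -
    fix a b assume ab: "a \<in> L" "b \<in> L"
    have "\<psi> (a \<otimes> b) = \<psi> (b \<otimes> a)" using hmul ab by (simp add: add.commute)
    moreover have "a \<otimes> b \<in> L" "b \<otimes> a \<in> L" using sgM[OF L] ab by auto
    ultimately show "a \<otimes> b = b \<otimes> a" using inj by (meson inj_onD)
  qed
  have one: "\<psi> \<one> = 0"
  proof -
    have "\<psi> \<one>\<^bsub>GL\<^esub> = \<one>\<^bsub>integer_mod_group 21\<^esub>"
      using hom_one[OF hom gGL group_integer_mod_group] by blast
    then show ?thesis unfolding GL_def by simp
  qed
  have hpow: "\<psi> (a [^] n) = (int n * \<psi> a) mod 21" if a: "a \<in> L" for a and n :: nat
  proof -
    have "\<psi> (a [^]\<^bsub>GL\<^esub> n) = (\<psi> a) [^]\<^bsub>integer_mod_group 21\<^esub> n"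
      by (rule hom_nat_pow[OF hom _ gGL group_integer_mod_group]) (use a in \<open>simp add: GL_def\<close>)
    moreover have "a [^]\<^bsub>GL\<^esub> n = a [^] n" unfolding GL_def by (simp add: nat_pow_consistent[symmetric])
    ultimately show ?thesis by simp
  qed
  have powL: "a [^] (n::nat) \<in> L" if "a \<in> L" for a n
  proof -
    have "a [^]\<^bsub>GL\<^esub> n \<in> carrier GL" using that by (intro monoid.nat_pow_closed[OF group.is_monoid[OF gGL]]) (simp add: GL_def)
    then show ?thesis unfolding GL_def by (simp add: nat_pow_consistent[symmetric])
  qed
  show "card {l \<in> L. l [^] (m::nat) = \<one>} = m" if m: "m = 3 \<or> m = 7" for m
  proof -
    have img: "\<psi> ` {l \<in> L. l [^] m = \<one>} = {i \<in> {0..<21::int}. (int m * i) mod 21 = 0}"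
    proof
      show "\<psi> ` {l \<in> L. l [^] m = \<one>} \<subseteq> {i \<in> {0..<21}. int m * i mod 21 = 0}"
      proof
        fix i assume "i \<in> \<psi> ` {l \<in> L. l [^] m = \<one>}"
        then obtain l where l: "l \<in> L" "l [^] m = \<one>" "i = \<psi> l" by blast
        have "int m * \<psi> l mod 21 = 0" using hpow[OF l(1), of m] l(2) one by simp
        moreover have "\<psi> l \<in> {0..<21}" using surj l(1) by blast
        ultimately show "i \<in> {i \<in> {0..<21}. int m * i mod 21 = 0}" using l(3) by simp
      qed
      show "{i \<in> {0..<21}. int m * i mod 21 = 0} \<subseteq> \<psi> ` {l \<in> L. l [^] m = \<one>}"
      proof
        fix i assume i: "i \<in> {i \<in> {0..<21::int}. int m * i mod 21 = 0}"
        then obtain l where l: "l \<in> L" "\<psi> l = i" using surj by (metis (no_types, lifting) imageE mem_Collect_eq)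
        have "\<psi> (l [^] m) = \<psi> \<one>" using hpow[OF l(1)] l(2) i one by simp
        then have "l [^] m = \<one>" using inj powL[OF l(1)] sg1[OF L] by (meson inj_onD)
        then show "i \<in> \<psi> ` {l \<in> L. l [^] m = \<one>}" using l by blast
      qed
    qed
    have "card (\<psi> ` {l \<in> L. l [^] m = \<one>}) = card {l \<in> L. l [^] m = \<one>}"
      by (rule card_image[OF inj_on_subset[OF inj]]) blast
    then have c: "card {l \<in> L. l [^] m = \<one>} = card {i \<in> {0..<21::int}. (int m * i) mod 21 = 0}"
      using img by simp
    show ?thesis using m
    proof
      assume m3: "m = 3"
      have "card {i \<in> {0..<21::int}. (int m * i) mod 21 = 0} = card {0::int,7,14}" using s3 m3 by simp
      then show ?thesis using c m3 by simp
    next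
      assume m7: "m = 7"
      have "card {i \<in> {0..<21::int}. (int m * i) mod 21 = 0} = card {0::int,3,6,9,12,15,18}" using s7 m7 by simp
      then show ?thesis using c m7 by simp
    qed
  qed
qed

lemma pow_fix: "d \<in> carrier G \<Longrightarrow> \<beta> \<in> \<Omega> \<Longrightarrow> d \<beta> = \<beta> \<Longrightarrow> (d [^] (n::nat)) \<beta> = \<beta>"
proof (induction n)
  case 0 then show ?case by (simp add: one_apply)
next
  case (Suc n)
  have "(d [^] Suc n) \<beta> = (d [^] n \<otimes> d) \<beta>" by simp
  also have "\<dots> = (d [^] n) (d \<beta>)" using Suc.prems by (intro mult_apply) auto
  finally show ?case using Suc by simp
qed

lemma gen_pow: "s \<in> carrier G \<Longrightarrow> d \<in> generate G {s} \<Longrightarrow> \<exists>i::nat. d = s [^] i"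
  using generate_pow_nat[of s] ord_ge_1[OF fin_carrier] by fastforce

lemma sg_pow: "subgroup S G \<Longrightarrow> x \<in> S \<Longrightarrow> x [^] (n::nat) \<in> S"
proof (induction n)
  case 0 then show ?case using sg1 by simp
next
  case (Suc n) then show ?case using sgM by simp
qed

lemma ord_dvd_sub: "subgroup S G \<Longrightarrow> x \<in> S \<Longrightarrow> ord x dvd card S"
proof -
  assume S: "subgroup S G" and x: "x \<in> S"
  have xc: "x \<in> carrier G" using sgC[OF S x] .
  have gs: "generate G {x} \<subseteq> S" by (rule generate_subgroup_incl[OF _ S]) (use x in simp)
  have "card (generate G {x}) dvd card S" by (rule sub_dvd[OF generate_is_subgroup S gs]) (simp add: xc)
  then show ?thesis using generate_pow_card[OF xc] by simp
qed

definition cj :: "('a \<Rightarrow> 'a) \<Rightarrow> ('a \<Rightarrow> 'a) \<Rightarrow> ('a \<Rightarrow> 'a)" where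
  "cj g x = g \<otimes> x \<otimes> inv g"

lemma cj_closed: "g \<in> carrier G \<Longrightarrow> x \<in> carrier G \<Longrightarrow> cj g x \<in> carrier G"
  unfolding cj_def by simp

lemma cj_mult: "g \<in> carrier G \<Longrightarrow> x \<in> carrier G \<Longrightarrow> y \<in> carrier G \<Longrightarrow> cj g (x \<otimes> y) = cj g x \<otimes> cj g y"
  unfolding cj_def by (simp add: m_assoc)

lemma cj_one: "g \<in> carrier G \<Longrightarrow> cj g \<one> = \<one>"
  unfolding cj_def by simp

lemma cj_inv: "g \<in> carrier G \<Longrightarrow> x \<in> carrier G \<Longrightarrow> cj g (inv x) = inv (cj g x)"
  unfolding cj_def by (simp add: inv_mult_group m_assoc)

lemma cj_cj: "a \<in> carrier G \<Longrightarrow> b \<in> carrier G \<Longrightarrow> x \<in> carrier G \<Longrightarrow> cj a (cj b x) = cj (a \<otimes> b) x"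
  unfolding cj_def by (simp add: inv_mult_group m_assoc)

lemma cj_back: "g \<in> carrier G \<Longrightarrow> x \<in> carrier G \<Longrightarrow> cj (inv g) (cj g x) = x"
  unfolding cj_def by (simp add: m_assoc)

lemma cj_inj: "g \<in> carrier G \<Longrightarrow> x \<in> carrier G \<Longrightarrow> y \<in> carrier G \<Longrightarrow> cj g x = cj g y \<Longrightarrow> x = y"
  by (metis cj_back)

lemma cj_apply: "g \<in> carrier G \<Longrightarrow> x \<in> carrier G \<Longrightarrow> \<beta> \<in> \<Omega> \<Longrightarrow> cj g x (g \<beta>) = g (x \<beta>)"
  unfolding cj_def by (simp add: mult_apply inv_apply1 in_Omega)

lemma cj_apply_fix: "g \<in> carrier G \<Longrightarrow> x \<in> carrier G \<Longrightarrow> \<beta> \<in> \<Omega> \<Longrightarrow> g \<beta> = \<beta> \<Longrightarrow> cj g x \<beta> = g (x \<beta>)"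
  using cj_apply by metis

lemma img_mult: "g \<in> carrier G \<Longrightarrow> h \<in> carrier G \<Longrightarrow> A \<subseteq> \<Omega> \<Longrightarrow> g ` (h ` A) = (g \<otimes> h) ` A"
  by (auto simp: mult_apply image_image subset_iff intro!: image_cong)

end

locale main = pset +
  fixes H K N :: "('a \<Rightarrow> 'a) set" and \<alpha> :: 'a
  assumes H: "subgroup H G" and N: "subgroup N G" and NH: "N \<subseteq> H"
  and Nnorm: "\<And>h n. h \<in> H \<Longrightarrow> n \<in> N \<Longrightarrow> h \<otimes> n \<otimes> inv h \<in> N"
  and Ntr: "\<And>\<beta>. \<beta> \<in> \<Omega> \<Longrightarrow> \<exists>n\<in>N. n \<alpha> = \<beta>"
  and Nreg: "\<And>n. n \<in> N \<Longrightarrow> n \<alpha> = \<alpha> \<Longrightarrow> n = \<one>"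
  and a\<Omega>: "\<alpha> \<in> \<Omega>" and card\<Omega>: "card \<Omega> = 64"
  and K: "subgroup K G" and KH: "K \<subseteq> H"
  and Knorm: "\<And>h k. h \<in> H \<Longrightarrow> k \<in> K \<Longrightarrow> h \<otimes> k \<otimes> inv h \<in> K"
  and Htr: "\<And>\<beta> \<gamma>. \<beta> \<in> \<Omega> \<Longrightarrow> \<beta> \<noteq> \<alpha> \<Longrightarrow> \<gamma> \<in> \<Omega> \<Longrightarrow> \<gamma> \<noteq> \<alpha> \<Longrightarrow> \<exists>h\<in>H. h \<alpha> = \<alpha> \<and> h \<beta> = \<gamma>"
  and Kant: "pstab K \<alpha> \<noteq> {\<one>}"
begin

abbreviation "Ka \<equiv> pstab K \<alpha>"
abbreviation "Ha \<equiv> pstab H \<alpha>"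

lemma Nc: "n \<in> N \<Longrightarrow> n \<in> carrier G" by (rule sgC[OF N])
lemma Kc: "k \<in> K \<Longrightarrow> k \<in> carrier G" by (rule sgC[OF K])
lemma Hc: "h \<in> H \<Longrightarrow> h \<in> carrier G" by (rule sgC[OF H])

lemma Ka_sub: "subgroup Ka G" using K a\<Omega> by (rule pstab_subgroup)
lemma Ha_sub: "subgroup Ha G" using H a\<Omega> by (rule pstab_subgroup)

lemma Nreg2: assumes "n1 \<in> N" "n2 \<in> N" "n1 \<alpha> = n2 \<alpha>" shows "n1 = n2"
proof -
  have c: "n1 \<in> carrier G" "n2 \<in> carrier G" using assms Nc by auto
  have "(inv n2 \<otimes> n1) \<alpha> = \<alpha>" using assms c a\<Omega> by (simp add: mult_apply inv_apply1)
  moreover have "inv n2 \<otimes> n1 \<in> N" by (rule sgM[OF N sgI[OF N assms(2)] assms(1)])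
  ultimately have e: "inv n2 \<otimes> n1 = \<one>" using Nreg by blast
  have "n1 = n2 \<otimes> (inv n2 \<otimes> n1)" using c by (simp add: m_assoc[symmetric])
  then show ?thesis using e c by simp
qed

lemma N_bij: "bij_betw (\<lambda>n. n \<alpha>) N \<Omega>"
  unfolding bij_betw_def
proof
  show "inj_on (\<lambda>n. n \<alpha>) N" using Nreg2 by (auto intro: inj_onI)
  show "(\<lambda>n. n \<alpha>) ` N = \<Omega>"
  proof
    show "(\<lambda>n. n \<alpha>) ` N \<subseteq> \<Omega>" using in_Omega[OF Nc a\<Omega>] by blast
    show "\<Omega> \<subseteq> (\<lambda>n. n \<alpha>) ` N" using Ntr by blast
  qed
qed

lemma cardN: "card N = 64" using bij_betw_same_card[OF N_bij] card\<Omega> by simp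

lemma Ka_conj: assumes h: "h \<in> Ha" and k: "k \<in> Ka" shows "h \<otimes> k \<otimes> inv h \<in> Ka"
proof -
  have h1: "h \<in> H" "h \<alpha> = \<alpha>" and k1: "k \<in> K" "k \<alpha> = \<alpha>" using h k unfolding pstab_def by auto
  have "(h \<otimes> k \<otimes> inv h) \<alpha> = \<alpha>" using conj_apply_fix[OF Hc[OF h1(1)] Kc[OF k1(1)] a\<Omega> h1(2)] h1 k1 by simp
  moreover have "h \<otimes> k \<otimes> inv h \<in> K" using Knorm h1 k1 by blast
  ultimately show ?thesis unfolding pstab_def by blast
qed

lemma N_sub_K: "N \<subseteq> K"
proof -
  have "\<exists>n0\<in>K \<inter> N. n0 \<noteq> \<one>"
  proof (rule ccontr)
    assume "\<not> ?thesis"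
    then have KN: "\<And>x. x \<in> K \<Longrightarrow> x \<in> N \<Longrightarrow> x = \<one>" by blast
    have "Ka \<subseteq> {\<one>}"
    proof
      fix k assume k: "k \<in> Ka"
      then have kK: "k \<in> K" and ka: "k \<alpha> = \<alpha>" unfolding pstab_def by auto
      have kc: "k \<in> carrier G" using kK Kc by blast
      have kH: "k \<in> H" using kK KH by blast
      have "k \<beta> = \<beta>" if \<beta>: "\<beta> \<in> \<Omega>" for \<beta>
      proof -
        obtain n where n: "n \<in> N" "n \<alpha> = \<beta>" using Ntr \<beta> by blast
        have nc: "n \<in> carrier G" using n Nc by blast
        have nH: "n \<in> H" using n NH by blast
        define c where "c = k \<otimes> n \<otimes> inv k \<otimes> inv n"
        have "c \<in> N" unfolding c_def by (rule sgM[OF N Nnorm[OF kH n(1)] sgI[OF N n(1)]])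
        moreover have "c \<in> K"
        proof -
          have "n \<otimes> inv k \<otimes> inv n \<in> K" by (rule Knorm[OF nH sgI[OF K kK]])
          then have "k \<otimes> (n \<otimes> inv k \<otimes> inv n) \<in> K" by (rule sgM[OF K kK])
          then show ?thesis unfolding c_def using kc nc by (simp add: m_assoc)
        qed
        ultimately have "c = \<one>" using KN by blast
        then have "k \<otimes> n \<otimes> inv k = n"
        proof -
          have "k \<otimes> n \<otimes> inv k = c \<otimes> n" unfolding c_def using kc nc by (simp add: m_assoc)
          then show ?thesis using \<open>c = \<one>\<close> nc by simp
        qed
        then have "(k \<otimes> n \<otimes> inv k) \<alpha> = n \<alpha>" by simp
        then show "k \<beta> = \<beta>" using conj_apply_fix[OF kc nc a\<Omega> ka] n by simp
      qed
      then show "k \<in> {\<one>}" using fix_all_one kc by blast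
    qed
    moreover have "\<one> \<in> Ka" by (rule sg1[OF Ka_sub])
    ultimately show False using Kant by blast
  qed
  then obtain n0 where n0: "n0 \<in> K" "n0 \<in> N" "n0 \<noteq> \<one>" by blast
  have n0c: "n0 \<in> carrier G" using n0 Nc by blast
  show ?thesis
  proof
    fix n assume n: "n \<in> N"
    show "n \<in> K"
    proof (cases "n = \<one>")
      case True then show ?thesis using sg1[OF K] by simp
    next
      case False
      have nc: "n \<in> carrier G" using n Nc by blast
      have "n0 \<alpha> \<noteq> \<alpha>" using Nreg n0 by blast
      moreover have "n \<alpha> \<noteq> \<alpha>" using Nreg n False by blast
      ultimately obtain h where h: "h \<in> H" "h \<alpha> = \<alpha>" "h (n0 \<alpha>) = n \<alpha>"
        using Htr in_Omega a\<Omega> n0c nc by blast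
      have hc: "h \<in> carrier G" using h Hc by blast
      have m: "h \<otimes> n0 \<otimes> inv h \<in> K" "h \<otimes> n0 \<otimes> inv h \<in> N" using Knorm Nnorm h n0 by auto
      have "(h \<otimes> n0 \<otimes> inv h) \<alpha> = n \<alpha>" using conj_apply_fix[OF hc n0c a\<Omega> h(2)] h(3) by simp
      then have "h \<otimes> n0 \<otimes> inv h = n" using Nreg2 m(2) n by blast
      then show ?thesis using m(1) by simp
    qed
  qed
qed


definition st :: "'a \<Rightarrow> ('a \<Rightarrow> 'a) set" where "st \<beta> = {k \<in> Ka. k \<beta> = \<beta>}"

definition isub :: "('a \<Rightarrow> 'a) set \<Rightarrow> bool" where
  "isub U \<longleftrightarrow> subgroup U G \<and> U \<subseteq> N \<and> U \<noteq> {\<one>} \<and> (\<forall>k\<in>Ka. \<forall>u\<in>U. cj k u \<in> U)"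

lemma KaK: "k \<in> Ka \<Longrightarrow> k \<in> K" and Kafix: "k \<in> Ka \<Longrightarrow> k \<alpha> = \<alpha>" and Kac: "k \<in> Ka \<Longrightarrow> k \<in> carrier G"
  unfolding pstab_def using Kc by auto
lemma HaH: "h \<in> Ha \<Longrightarrow> h \<in> H" and Hafix: "h \<in> Ha \<Longrightarrow> h \<alpha> = \<alpha>" and Hac: "h \<in> Ha \<Longrightarrow> h \<in> carrier G"
  unfolding pstab_def using Hc by auto

lemma Ha_trans: assumes "\<beta> \<in> \<Omega>" "\<beta> \<noteq> \<alpha>" "\<gamma> \<in> \<Omega>" "\<gamma> \<noteq> \<alpha>" obtains h where "h \<in> Ha" "h \<beta> = \<gamma>"
  using Htr[OF assms] unfolding pstab_def by blast

lemma cjN: "h \<in> H \<Longrightarrow> n \<in> N \<Longrightarrow> cj h n \<in> N" unfolding cj_def by (rule Nnorm)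

lemma cj_fix_iff: assumes k: "k \<in> Ka" and n: "n \<in> N" shows "cj k n = n \<longleftrightarrow> k (n \<alpha>) = n \<alpha>"
proof -
  have e: "cj k n \<alpha> = k (n \<alpha>)" using cj_apply_fix[OF Kac[OF k] Nc[OF n] a\<Omega> Kafix[OF k]] .
  have "cj k n \<in> N" using cjN KH KaK[OF k] n by blast
  then show ?thesis using e Nreg2 n by metis
qed

lemma st_le: assumes \<beta>: "\<beta> \<in> \<Omega>" "\<beta> \<noteq> \<alpha>" and \<gamma>: "\<gamma> \<in> \<Omega>" "\<gamma> \<noteq> \<alpha>" shows "card (st \<beta>) \<le> card (st \<gamma>)"
proof -
  obtain h where h: "h \<in> Ha" "h \<beta> = \<gamma>" using Ha_trans[OF \<beta> \<gamma>] by blast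
  have hc: "h \<in> carrier G" using Hac[OF h(1)] .
  have "inj_on (cj h) (st \<beta>)"
  proof (rule inj_onI)
    fix x y assume "x \<in> st \<beta>" "y \<in> st \<beta>" "cj h x = cj h y"
    then show "x = y" using cj_inj[OF hc Kac Kac] unfolding st_def by blast
  qed
  moreover have "cj h ` st \<beta> \<subseteq> st \<gamma>"
  proof
    fix x assume "x \<in> cj h ` st \<beta>"
    then obtain k where k: "k \<in> Ka" "k \<beta> = \<beta>" "x = cj h k" unfolding st_def by blast
    have "cj h k \<in> Ka" using Ka_conj[OF h(1) k(1)] unfolding cj_def .
    moreover have "cj h k \<gamma> = \<gamma>" using cj_apply[OF hc Kac[OF k(1)] \<beta>(1)] h(2) k(2) by simp
    ultimately show "x \<in> st \<gamma>" using k(3) unfolding st_def by blast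
  qed
  moreover have "finite (st \<gamma>)" by (rule fin_sub) (auto simp: st_def Kac)
  ultimately show ?thesis by (rule card_inj_on_le)
qed

lemma st_card: "\<beta> \<in> \<Omega> \<Longrightarrow> \<beta> \<noteq> \<alpha> \<Longrightarrow> \<gamma> \<in> \<Omega> \<Longrightarrow> \<gamma> \<noteq> \<alpha> \<Longrightarrow> card (st \<beta>) = card (st \<gamma>)"
  using st_le le_antisym by blast

lemma isub_conj:
  assumes W: "isub W" and h: "h \<in> Ha"
  shows "isub (cj h ` W)" "card (cj h ` W) = card W"
proof -
  have hc: "h \<in> carrier G" using Hac[OF h] .
  have Ws: "subgroup W G" "W \<subseteq> N" "W \<noteq> {\<one>}" "\<And>k u. k \<in> Ka \<Longrightarrow> u \<in> W \<Longrightarrow> cj k u \<in> W"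
    using W unfolding isub_def by auto
  have Wc: "\<And>w. w \<in> W \<Longrightarrow> w \<in> carrier G" using sgC[OF Ws(1)] .
  show "card (cj h ` W) = card W"
    by (rule card_image, rule inj_onI) (metis cj_inj hc Wc)
  have sg: "subgroup (cj h ` W) G"
  proof (rule subgroupI)
    show "cj h ` W \<subseteq> carrier G" using cj_closed[OF hc] Wc by blast
    show "cj h ` W \<noteq> {}" using sg1[OF Ws(1)] by blast
    fix a b assume a: "a \<in> cj h ` W" and b: "b \<in> cj h ` W"
    then obtain x y where xy: "x \<in> W" "y \<in> W" "a = cj h x" "b = cj h y" by blast
    have "inv a = cj h (inv x)" using cj_inv[OF hc Wc[OF xy(1)]] xy by simp
    then show "inv a \<in> cj h ` W" using sgI[OF Ws(1) xy(1)] by blast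
    have "a \<otimes> b = cj h (x \<otimes> y)" using cj_mult[OF hc Wc[OF xy(1)] Wc[OF xy(2)]] xy by simp
    then show "a \<otimes> b \<in> cj h ` W" using sgM[OF Ws(1) xy(1) xy(2)] by blast
  qed
  have sN: "cj h ` W \<subseteq> N" using cjN[OF HaH[OF h]] Ws(2) by blast
  have n1: "cj h ` W \<noteq> {\<one>}"
  proof
    assume e: "cj h ` W = {\<one>}"
    have "W \<subseteq> {\<one>}"
    proof
      fix w assume w: "w \<in> W"
      have "cj h w \<in> cj h ` W" using w by (rule imageI)
      then have "cj h w = \<one>" using e by simp
      then have "cj h w = cj h \<one>" using cj_one[OF hc] by simp
      then show "w \<in> {\<one>}" using cj_inj[OF hc Wc[OF w]] by simp
    qed
    then show False using Ws(3) sg1[OF Ws(1)] by blast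
  qed
  have inv: "\<forall>k\<in>Ka. \<forall>u\<in>cj h ` W. cj k u \<in> cj h ` W"
  proof (intro ballI)
    fix k u assume k: "k \<in> Ka" and u: "u \<in> cj h ` W"
    then obtain w where w: "w \<in> W" "u = cj h w" by blast
    have kc: "k \<in> carrier G" using Kac[OF k] .
    have hi: "inv h \<in> Ha" using sgI[OF Ha_sub h] .
    define k' where "k' = inv h \<otimes> k \<otimes> h"
    have k'K: "k' \<in> Ka" using Ka_conj[OF hi k] hc unfolding k'_def by simp
    have "k \<otimes> h = h \<otimes> k'" unfolding k'_def using hc kc by (simp add: m_assoc)
    have "cj k u = cj k (cj h w)" using w by simp
    also have "\<dots> = cj (k \<otimes> h) w" by (rule cj_cj[OF kc hc Wc[OF w(1)]])
    also have "\<dots> = cj (h \<otimes> k') w" using \<open>k \<otimes> h = h \<otimes> k'\<close> by simp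
    also have "\<dots> = cj h (cj k' w)" by (rule cj_cj[OF hc Kac[OF k'K] Wc[OF w(1)], symmetric])
    finally have "cj k u = cj h (cj k' w)" .
    then show "cj k u \<in> cj h ` W" using Ws(4)[OF k'K w(1)] by blast
  qed
  show "isub (cj h ` W)" unfolding isub_def using sg sN n1 inv by blast
qed

lemma isub_inter:
  assumes V: "isub V" and W: "isub W" and minV: "\<And>U. isub U \<Longrightarrow> card V \<le> card U"
    and cardVW: "card V = card W"
  shows "V = W \<or> V \<inter> W = {\<one>}"
proof (rule ccontr)
  assume ne: "\<not> (V = W \<or> V \<inter> W = {\<one>})"
  have Vs: "subgroup V G" "V \<subseteq> N" "\<And>k u. k \<in> Ka \<Longrightarrow> u \<in> V \<Longrightarrow> cj k u \<in> V"
    using V unfolding isub_def by auto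
  have Ws: "subgroup W G" "W \<subseteq> N" "\<And>k u. k \<in> Ka \<Longrightarrow> u \<in> W \<Longrightarrow> cj k u \<in> W"
    using W unfolding isub_def by auto
  have "subgroup (V \<inter> W) G" using Vs(1) Ws(1) by (rule subgroups_Inter_pair)
  moreover have "V \<inter> W \<subseteq> N" using Vs(2) by blast
  moreover have "V \<inter> W \<noteq> {\<one>}" using ne by blast
  moreover have "\<forall>k\<in>Ka. \<forall>u\<in>V \<inter> W. cj k u \<in> V \<inter> W" using Vs(3) Ws(3) by blast
  ultimately have "isub (V \<inter> W)" unfolding isub_def by blast
  then have c: "card V \<le> card (V \<inter> W)" using minV by blast
  have fV: "finite V" "finite W" using fin_sub[OF subgroup.subset[OF Vs(1)]] fin_sub[OF subgroup.subset[OF Ws(1)]] by auto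
  have "card (V \<inter> W) \<le> card V" by (rule card_mono[OF fV(1)]) blast
  then have "card (V \<inter> W) = card V" using c by simp
  then have "V \<inter> W = V" by (intro card_subset_eq[OF fV(1)]) auto
  moreover have "card (V \<inter> W) \<le> card W" by (rule card_mono[OF fV(2)]) blast
  then have "card (V \<inter> W) = card W" using c cardVW by simp
  then have "V \<inter> W = W" by (intro card_subset_eq[OF fV(2)]) auto
  ultimately show False using ne by simp
qed


lemma isub_facts: assumes "isub W"
  shows "subgroup W G" "W \<subseteq> N" "W \<noteq> {\<one>}" "\<And>k u. k \<in> Ka \<Longrightarrow> u \<in> W \<Longrightarrow> cj k u \<in> W"
  using assms unfolding isub_def by auto

lemma st_prod:
  assumes V: "isub V" and W: "isub W" and VW: "V \<inter> W = {\<one>}"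
    and v: "v \<in> V" "v \<noteq> \<one>" and w: "w \<in> W" "w \<noteq> \<one>"
  shows "st (v \<alpha>) = st (w \<alpha>)"
proof -
  note Vs = isub_facts[OF V] and Ws = isub_facts[OF W]
  have vN: "v \<in> N" and wN: "w \<in> N" using v w Vs(2) Ws(2) by auto
  have vc: "v \<in> carrier G" and wc: "w \<in> carrier G" using Nc vN wN by auto
  have vwN: "v \<otimes> w \<in> N" using sgM[OF N vN wN] .
  have vwne: "v \<otimes> w \<noteq> \<one>"
  proof
    assume "v \<otimes> w = \<one>"
    moreover have "w = inv v \<otimes> (v \<otimes> w)" using vc wc by simp
    ultimately have "w = inv v" using vc by simp
    then have "w \<in> V" using sgI[OF Vs(1) v(1)] by simp
    then show False using VW w by blast
  qed
  have ne: "v \<alpha> \<noteq> \<alpha>" "w \<alpha> \<noteq> \<alpha>" "(v \<otimes> w) \<alpha> \<noteq> \<alpha>"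
    using Nreg[OF vN] Nreg[OF wN] Nreg[OF vwN] v(2) w(2) vwne by blast+
  have in\<Omega>: "v \<alpha> \<in> \<Omega>" "w \<alpha> \<in> \<Omega>" "(v \<otimes> w) \<alpha> \<in> \<Omega>"
    using in_Omega[OF vc a\<Omega>] in_Omega[OF wc a\<Omega>] in_Omega[OF m_closed[OF vc wc] a\<Omega>] by auto
  have eq: "st ((v \<otimes> w) \<alpha>) = st (v \<alpha>) \<inter> st (w \<alpha>)"
  proof
    show "st (v \<alpha>) \<inter> st (w \<alpha>) \<subseteq> st ((v \<otimes> w) \<alpha>)"
    proof
      fix k assume k: "k \<in> st (v \<alpha>) \<inter> st (w \<alpha>)"
      then have kK: "k \<in> Ka" unfolding st_def by blast
      have "cj k v = v" "cj k w = w" using k cj_fix_iff[OF kK vN] cj_fix_iff[OF kK wN] unfolding st_def by auto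
      then have "cj k (v \<otimes> w) = v \<otimes> w" using cj_mult[OF Kac[OF kK] vc wc] by simp
      then show "k \<in> st ((v \<otimes> w) \<alpha>)" using cj_fix_iff[OF kK vwN] kK unfolding st_def by blast
    qed
    show "st ((v \<otimes> w) \<alpha>) \<subseteq> st (v \<alpha>) \<inter> st (w \<alpha>)"
    proof
      fix k assume k: "k \<in> st ((v \<otimes> w) \<alpha>)"
      then have kK: "k \<in> Ka" unfolding st_def by blast
      have kc: "k \<in> carrier G" using Kac[OF kK] .
      have "cj k (v \<otimes> w) = v \<otimes> w" using k cj_fix_iff[OF kK vwN] unfolding st_def by blast
      then have ab: "cj k v \<otimes> cj k w = v \<otimes> w" using cj_mult[OF kc vc wc] by simp
      have aV: "cj k v \<in> V" using Vs(4)[OF kK v(1)] .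
      have bW: "cj k w \<in> W" using Ws(4)[OF kK w(1)] .
      have ac: "cj k v \<in> carrier G" and bc: "cj k w \<in> carrier G" using cj_closed kc vc wc by auto
      have "inv v \<otimes> cj k v = w \<otimes> inv (cj k w)"
      proof -
        have "inv v \<otimes> cj k v = inv v \<otimes> (cj k v \<otimes> cj k w) \<otimes> inv (cj k w)"
          using ac bc vc by (simp add: m_assoc)
        also have "\<dots> = w \<otimes> inv (cj k w)" using ab vc wc bc by simp
        finally show ?thesis .
      qed
      moreover have "inv v \<otimes> cj k v \<in> V" using sgM[OF Vs(1) sgI[OF Vs(1) v(1)] aV] .
      moreover have "w \<otimes> inv (cj k w) \<in> W" using sgM[OF Ws(1) w(1) sgI[OF Ws(1) bW]] .
      ultimately have "inv v \<otimes> cj k v \<in> V \<inter> W" by simp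
      then have "inv v \<otimes> cj k v = \<one>" using VW by simp
      moreover have "cj k v = v \<otimes> (inv v \<otimes> cj k v)" using vc ac by simp
      ultimately have e1: "cj k v = v" using vc by simp
      then have "v \<otimes> cj k w = v \<otimes> w" using ab by simp
      then have "cj k w = w" by (rule l_cancel[OF _ bc wc vc])
      then show "k \<in> st (v \<alpha>) \<inter> st (w \<alpha>)"
        using e1 cj_fix_iff[OF kK vN] cj_fix_iff[OF kK wN] kK unfolding st_def by blast
    qed
  qed
  have fin: "finite (st (v \<alpha>))" "finite (st (w \<alpha>))" by (rule fin_sub, auto simp: st_def Kac)+
  have c1: "card (st ((v \<otimes> w) \<alpha>)) = card (st (v \<alpha>))" by (rule st_card) (use ne in\<Omega> in auto)
  have c2: "card (st ((v \<otimes> w) \<alpha>)) = card (st (w \<alpha>))" by (rule st_card) (use ne in\<Omega> in auto)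
  have "st ((v \<otimes> w) \<alpha>) = st (v \<alpha>)" using card_subset_eq[OF fin(1)] eq c1 by blast
  moreover have "st ((v \<otimes> w) \<alpha>) = st (w \<alpha>)" using card_subset_eq[OF fin(2)] eq c2 by blast
  ultimately show ?thesis by simp
qed

lemma Ka_free_aux:
  assumes U0: "isub U0" "card U0 < 64"
  shows "\<And>k \<beta>. k \<in> Ka \<Longrightarrow> \<beta> \<in> \<Omega> \<Longrightarrow> \<beta> \<noteq> \<alpha> \<Longrightarrow> k \<beta> = \<beta> \<Longrightarrow> k = \<one>"
proof -
  obtain W where W: "isub W" and minW: "\<And>V. isub V \<Longrightarrow> card W \<le> card V"
    using ex_has_least_nat[of isub U0 card] U0(1) by blast
  note Ws = isub_facts[OF W]
  have cW: "card W < 64" using minW[OF U0(1)] U0(2) by simp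
  have WN: "W \<noteq> N" using cW cardN by auto
  then obtain n1 where n1: "n1 \<in> N" "n1 \<notin> W" using Ws(2) by blast
  have n1ne: "n1 \<noteq> \<one>" using n1 sg1[OF Ws(1)] by blast
  obtain w0 where w0: "w0 \<in> W" "w0 \<noteq> \<one>" using Ws(3) sg1[OF Ws(1)] by blast
  have w0N: "w0 \<in> N" using w0 Ws(2) by blast
  have w0c: "w0 \<in> carrier G" using Nc[OF w0N] .
  have w0a: "w0 \<alpha> \<in> \<Omega>" "w0 \<alpha> \<noteq> \<alpha>" using in_Omega[OF w0c a\<Omega>] Nreg w0N w0(2) by auto
  \<comment> \<open>conjugates meeting W trivially\<close>
  have conjcase: "\<And>h. h \<in> Ha \<Longrightarrow> cj h ` W \<noteq> W \<Longrightarrow> \<forall>v\<in>cj h ` W. \<forall>w\<in>W. v \<noteq> \<one> \<longrightarrow> w \<noteq> \<one> \<longrightarrow> st (v \<alpha>) = st (w \<alpha>)"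
  proof -
    fix h assume h: "h \<in> Ha" "cj h ` W \<noteq> W"
    have V: "isub (cj h ` W)" and cV: "card (cj h ` W) = card W" using isub_conj[OF W h(1)] by auto
    have "cj h ` W = W \<or> cj h ` W \<inter> W = {\<one>}"
      by (rule isub_inter[OF V W]) (use minW cV in auto)
    then have VW: "cj h ` W \<inter> W = {\<one>}" using h(2) by blast
    show "\<forall>v\<in>cj h ` W. \<forall>w\<in>W. v \<noteq> \<one> \<longrightarrow> w \<noteq> \<one> \<longrightarrow> st (v \<alpha>) = st (w \<alpha>)"
      using st_prod[OF V W VW] by blast
  qed
  have n1a: "n1 \<alpha> \<in> \<Omega>" "n1 \<alpha> \<noteq> \<alpha>" using in_Omega[OF Nc[OF n1(1)] a\<Omega>] Nreg n1(1) n1ne by auto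
  obtain h2 where h2: "h2 \<in> Ha" "h2 (w0 \<alpha>) = n1 \<alpha>" using Ha_trans[OF w0a n1a] by blast
  have cjh2: "cj h2 w0 = n1"
  proof -
    have "cj h2 w0 \<alpha> = h2 (w0 \<alpha>)" using cj_apply_fix[OF Hac[OF h2(1)] w0c a\<Omega> Hafix[OF h2(1)]] .
    moreover have "cj h2 w0 \<in> N" using cjN[OF HaH[OF h2(1)] w0N] .
    ultimately show ?thesis using Nreg2 n1(1) h2(2) by metis
  qed
  have h2W: "cj h2 ` W \<noteq> W" using cjh2 n1(2) w0(1) by blast
  have allW: "\<And>w. w \<in> W \<Longrightarrow> w \<noteq> \<one> \<Longrightarrow> st (w \<alpha>) = st (n1 \<alpha>)"
    using conjcase[OF h2(1) h2W] cjh2 w0(1) n1ne by (metis imageI)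
  have allb: "\<And>\<beta>. \<beta> \<in> \<Omega> \<Longrightarrow> \<beta> \<noteq> \<alpha> \<Longrightarrow> st \<beta> = st (n1 \<alpha>)"
  proof -
    fix \<beta> assume b: "\<beta> \<in> \<Omega>" "\<beta> \<noteq> \<alpha>"
    obtain h where h: "h \<in> Ha" "h (w0 \<alpha>) = \<beta>" using Ha_trans[OF w0a b] by blast
    have hc: "h \<in> carrier G" using Hac[OF h(1)] .
    have e: "cj h w0 \<alpha> = \<beta>" using cj_apply_fix[OF hc w0c a\<Omega> Hafix[OF h(1)]] h(2) by simp
    have ne: "cj h w0 \<noteq> \<one>" using e b one_apply a\<Omega> by auto
    show "st \<beta> = st (n1 \<alpha>)"
    proof (cases "cj h ` W = W")
      case True
      then have "cj h w0 \<in> W" using w0(1) by blast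
      then show ?thesis using allW ne e by blast
    next
      case False
      have "st (cj h w0 \<alpha>) = st (w0 \<alpha>)" using conjcase[OF h(1) False] w0 ne by blast
      then show ?thesis using e allW[OF w0] by simp
    qed
  qed
  fix k \<beta> assume k: "k \<in> Ka" and b: "\<beta> \<in> \<Omega>" "\<beta> \<noteq> \<alpha>" "k \<beta> = \<beta>"
  have kD: "k \<in> st (n1 \<alpha>)" using allb[OF b(1,2)] k b(3) unfolding st_def by blast
  have "k \<gamma> = \<gamma>" if g: "\<gamma> \<in> \<Omega>" for \<gamma>
  proof (cases "\<gamma> = \<alpha>")
    case True then show ?thesis using Kafix[OF k] by simp
  next
    case False
    then show ?thesis using allb[OF g False] kD unfolding st_def by blast
  qed
  then show "k = \<one>" using fix_all_one Kac[OF k] by blast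
qed


lemma fix_block: "is_block \<Omega> G' B \<Longrightarrow> g \<in> G' \<Longrightarrow> x \<in> B \<Longrightarrow> g x \<in> B \<Longrightarrow> g ` B = B"
  unfolding is_block_def by blast

lemma block_translate:
  assumes G': "subgroup G' G" "N \<subseteq> G'" and B: "is_block \<Omega> G' B"
  shows "\<exists>B'. is_block \<Omega> G' B' \<and> \<alpha> \<in> B' \<and> card B' = card B"
proof -
  have B\<Omega>: "B \<subseteq> \<Omega>" and Bne: "B \<noteq> {}" and Bb: "\<And>g. g \<in> G' \<Longrightarrow> g ` B = B \<or> g ` B \<inter> B = {}"
    using B unfolding is_block_def by auto
  obtain \<beta> where b: "\<beta> \<in> B" using Bne by blast
  obtain n where n: "n \<in> N" "n \<alpha> = \<beta>" using Ntr b B\<Omega> by blast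
  define g where "g = inv n"
  have nc: "n \<in> carrier G" using Nc[OF n(1)] .
  have gG: "g \<in> G'" unfolding g_def using sgI[OF G'(1)] n(1) G'(2) by blast
  have gc: "g \<in> carrier G" using nc unfolding g_def by simp
  have gb: "g \<beta> = \<alpha>" unfolding g_def using inv_apply1[OF nc a\<Omega>] n(2) by simp
  define B' where "B' = g ` B"
  have injg: "inj_on g \<Omega>" using inj_Omega[OF gc] .
  have cB: "card B' = card B" unfolding B'_def using inj_on_subset[OF injg B\<Omega>] by (rule card_image)
  have aB: "\<alpha> \<in> B'" unfolding B'_def using gb b by blast
  have B'\<Omega>: "B' \<subseteq> \<Omega>" unfolding B'_def using in_Omega[OF gc] B\<Omega> by blast
  have "is_block \<Omega> G' B'"
    unfolding is_block_def
  proof (intro conjI ballI)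
    show "B' \<subseteq> \<Omega>" by fact
    show "B' \<noteq> {}" using aB by blast
    fix x assume x: "x \<in> G'"
    have xc: "x \<in> carrier G" using sgC[OF G'(1) x] .
    define y where "y = inv g \<otimes> x \<otimes> g"
    have yG: "y \<in> G'" unfolding y_def using sgM[OF G'(1) sgM[OF G'(1) sgI[OF G'(1) gG] x] gG] .
    have yc: "y \<in> carrier G" using sgC[OF G'(1) yG] .
    have xg: "x \<otimes> g = g \<otimes> y" unfolding y_def using xc gc by (simp add: m_assoc)
    have "x ` B' = (x \<otimes> g) ` B" unfolding B'_def by (rule img_mult[OF xc gc B\<Omega>])
    also have "\<dots> = g ` (y ` B)" using xg img_mult[OF gc yc B\<Omega>] by simp
    finally have xB: "x ` B' = g ` (y ` B)" .
    have yB\<Omega>: "y ` B \<subseteq> \<Omega>" using in_Omega[OF yc] B\<Omega> by blast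
    show "x ` B' = B' \<or> x ` B' \<inter> B' = {}"
    proof (cases "y ` B = B")
      case True then show ?thesis using xB unfolding B'_def by simp
    next
      case False
      then have "y ` B \<inter> B = {}" using Bb[OF yG] by blast
      moreover have "g ` (y ` B) \<inter> g ` B = g ` (y ` B \<inter> B)"
        using inj_on_image_Int[OF injg yB\<Omega> B\<Omega>] by simp
      ultimately show ?thesis using xB unfolding B'_def by simp
    qed
  qed
  then show ?thesis using aB cB by blast
qed

lemma block_U:
  assumes G': "subgroup G' G" "N \<subseteq> G'" and B: "is_block \<Omega> G' B" and aB: "\<alpha> \<in> B"
  shows "subgroup {n \<in> N. n \<alpha> \<in> B} G" "card {n \<in> N. n \<alpha> \<in> B} = card B" "card B dvd 64"
    "\<And>g x. g \<in> G' \<Longrightarrow> g \<alpha> = \<alpha> \<Longrightarrow> x \<in> B \<Longrightarrow> g x \<in> B"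
proof -
  define U where "U = {n \<in> N. n \<alpha> \<in> B}"
  have B\<Omega>: "B \<subseteq> \<Omega>" using B unfolding is_block_def by auto
  have nU: "n ` B = B" if "n \<in> U" for n
    using fix_block[OF B _ aB] that G'(2) unfolding U_def by blast
  show fixers: "\<And>g x. g \<in> G' \<Longrightarrow> g \<alpha> = \<alpha> \<Longrightarrow> x \<in> B \<Longrightarrow> g x \<in> B"
    using fix_block[OF B _ aB] aB by (metis imageI)
  show sgU: "subgroup U G"
  proof (rule subgroupI)
    show "U \<subseteq> carrier G" unfolding U_def using Nc by blast
    have "\<one> \<alpha> \<in> B" using one_apply[OF a\<Omega>] aB by simp
    then show "U \<noteq> {}" unfolding U_def using sg1[OF N] by blast
    fix a b assume a: "a \<in> U" and b: "b \<in> U"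
    have aN: "a \<in> N" and bN: "b \<in> N" using a b unfolding U_def by auto
    have ac: "a \<in> carrier G" and bc: "b \<in> carrier G" using Nc aN bN by auto
    obtain \<gamma> where g: "\<gamma> \<in> B" "a \<gamma> = \<alpha>" using nU[OF a] aB by (metis imageE)
    have "(inv a) \<alpha> = \<gamma>" using inv_apply1[OF ac] g B\<Omega> by auto
    then show "inv a \<in> U" unfolding U_def using sgI[OF N aN] g(1) by simp
    have "(a \<otimes> b) \<alpha> = a (b \<alpha>)" by (rule mult_apply[OF ac bc a\<Omega>])
    moreover have "a (b \<alpha>) \<in> B" using nU[OF a] b unfolding U_def by blast
    ultimately show "a \<otimes> b \<in> U" unfolding U_def using sgM[OF N aN bN] by simp
  qed
  have "bij_betw (\<lambda>n. n \<alpha>) U B"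
    unfolding bij_betw_def
  proof
    show "inj_on (\<lambda>n. n \<alpha>) U" using Nreg2 unfolding U_def by (auto intro: inj_onI)
    show "(\<lambda>n. n \<alpha>) ` U = B"
    proof
      show "(\<lambda>n. n \<alpha>) ` U \<subseteq> B" unfolding U_def by blast
      show "B \<subseteq> (\<lambda>n. n \<alpha>) ` U"
      proof
        fix x assume x: "x \<in> B"
        then obtain n where "n \<in> N" "n \<alpha> = x" using Ntr B\<Omega> by blast
        then show "x \<in> (\<lambda>n. n \<alpha>) ` U" unfolding U_def using x by force
      qed
    qed
  qed
  then show cU: "card U = card B" by (rule bij_betw_same_card)
  have "card U dvd card N" by (rule sub_dvd[OF sgU N]) (auto simp: U_def)
  then show "card B dvd 64" using cU cardN by simp
qed


lemma Ka_fin: "finite Ka" using fin_sub Kac by blast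

lemma one_Ka: "\<one> \<in> Ka" by (rule sg1[OF Ka_sub])

lemma Ka_card_ge2: "card Ka \<ge> 2"
proof -
  obtain k where k: "k \<in> Ka" "k \<noteq> \<one>" using Kant one_Ka by blast
  have "{\<one>, k} \<subseteq> Ka" using k one_Ka by blast
  then have "card {\<one>, k} \<le> card Ka" by (rule card_mono[OF Ka_fin])
  then show ?thesis using k(2) by simp
qed

lemma Ka_maps: "k \<in> Ka \<Longrightarrow> x \<in> \<Omega> \<Longrightarrow> x \<noteq> \<alpha> \<Longrightarrow> k x \<in> \<Omega> \<and> k x \<noteq> \<alpha>"
proof -
  assume k: "k \<in> Ka" and x: "x \<in> \<Omega>" "x \<noteq> \<alpha>"
  have kc: "k \<in> carrier G" using Kac[OF k] .
  have "k x \<noteq> k \<alpha>" using inj_Omega[OF kc] x a\<Omega> by (metis inj_onD)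
  then show ?thesis using Kafix[OF k] in_Omega[OF kc x(1)] by simp
qed

lemma part1:
  assumes imp: "imprimitive_on \<Omega> K"
  shows "\<And>k \<beta>. k \<in> Ka \<Longrightarrow> \<beta> \<in> \<Omega> \<Longrightarrow> \<beta> \<noteq> \<alpha> \<Longrightarrow> k \<beta> = \<beta> \<Longrightarrow> k = \<one>"
    and "card Ka = 3 \<or> card Ka = 7"
proof -
  have "\<not> (\<forall>B. is_block \<Omega> K B \<longrightarrow> card B = 1 \<or> B = \<Omega>)"
    using imp unfolding imprimitive_on_def primitive_on_def by simp
  then obtain B where B: "is_block \<Omega> K B" "card B \<noteq> 1" "B \<noteq> \<Omega>" by blast
  obtain B' where B': "is_block \<Omega> K B'" "\<alpha> \<in> B'" "card B' = card B"
    using block_translate[OF K N_sub_K B(1)] by blast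
  note U = block_U[OF K N_sub_K B'(1,2)]
  define U0 where "U0 = {n \<in> N. n \<alpha> \<in> B'}"
  have B\<Omega>: "B \<subseteq> \<Omega>" "B \<noteq> {}" using B(1) unfolding is_block_def by auto
  have B'\<Omega>: "B' \<subseteq> \<Omega>" using B'(1) unfolding is_block_def by auto
  have finB: "finite B" using B\<Omega>(1) fin\<Omega> by (rule finite_subset)
  have "card B \<noteq> 0" using finB B\<Omega>(2) by simp
  then have c1: "card B \<ge> 2" using B(2) by linarith
  have "B \<subset> \<Omega>" using B\<Omega>(1) B(3) by blast
  then have c2: "card B < 64" using psubset_card_mono[OF fin\<Omega>] card\<Omega> by simp
  have cU0e: "card U0 = card B" using U(2) B'(3) unfolding U0_def by simp
  have isU0: "isub U0"
    unfolding isub_def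
  proof (intro conjI ballI)
    show "subgroup U0 G" unfolding U0_def by (rule U(1))
    show "U0 \<subseteq> N" unfolding U0_def by blast
    show "U0 \<noteq> {\<one>}"
    proof
      assume "U0 = {\<one>}"
      then have "card U0 = 1" by simp
      then show False using cU0e c1 by simp
    qed
    fix k u assume k: "k \<in> Ka" and u: "u \<in> U0"
    have uN: "u \<in> N" using u unfolding U0_def by blast
    have kH: "k \<in> H" using KH KaK[OF k] by blast
    have "cj k u \<in> N" by (rule cjN[OF kH uN])
    moreover have "cj k u \<alpha> = k (u \<alpha>)" by (rule cj_apply_fix[OF Kac[OF k] Nc[OF uN] a\<Omega> Kafix[OF k]])
    moreover have "u \<alpha> \<in> B'" using u unfolding U0_def by blast
    then have "k (u \<alpha>) \<in> B'" by (rule U(4)[OF KaK[OF k] Kafix[OF k]])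
    ultimately show "cj k u \<in> U0" unfolding U0_def by simp
  qed
  have cU0: "card U0 < 64" using cU0e c2 by simp
  show free: "\<And>k \<beta>. k \<in> Ka \<Longrightarrow> \<beta> \<in> \<Omega> \<Longrightarrow> \<beta> \<noteq> \<alpha> \<Longrightarrow> k \<beta> = \<beta> \<Longrightarrow> k = \<one>"
    by (rule Ka_free_aux[OF isU0 cU0])
  have d1: "card Ka dvd card (\<Omega> - {\<alpha>})"
  proof (rule free_dvd[OF Ka_sub])
    show "\<Omega> - {\<alpha>} \<subseteq> \<Omega>" by blast
    show "\<And>s x. s \<in> Ka \<Longrightarrow> x \<in> \<Omega> - {\<alpha>} \<Longrightarrow> s x \<in> \<Omega> - {\<alpha>}"
    proof -
      fix s x assume "s \<in> Ka" "x \<in> \<Omega> - {\<alpha>}"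
      then show "s x \<in> \<Omega> - {\<alpha>}" using Ka_maps[of s x] by blast
    qed
    show "\<And>s x. s \<in> Ka \<Longrightarrow> x \<in> \<Omega> - {\<alpha>} \<Longrightarrow> s x = x \<Longrightarrow> s = \<one>"
    proof -
      fix s x assume "s \<in> Ka" "x \<in> \<Omega> - {\<alpha>}" "s x = x"
      then show "s = \<one>" using free[of s x] by blast
    qed
  qed
  have d2: "card Ka dvd card (B' - {\<alpha>})"
  proof (rule free_dvd[OF Ka_sub])
    show "B' - {\<alpha>} \<subseteq> \<Omega>" using B'\<Omega> by blast
    show "\<And>s x. s \<in> Ka \<Longrightarrow> x \<in> B' - {\<alpha>} \<Longrightarrow> s x \<in> B' - {\<alpha>}"
    proof -
      fix s x assume s: "s \<in> Ka" and x: "x \<in> B' - {\<alpha>}"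
      have "s x \<in> B'" using x by (intro U(4)[OF KaK[OF s] Kafix[OF s]]) blast
      moreover have "s x \<noteq> \<alpha>" using Ka_maps[OF s] x B'\<Omega> by blast
      ultimately show "s x \<in> B' - {\<alpha>}" by blast
    qed
    show "\<And>s x. s \<in> Ka \<Longrightarrow> x \<in> B' - {\<alpha>} \<Longrightarrow> s x = x \<Longrightarrow> s = \<one>"
    proof -
      fix s x assume "s \<in> Ka" "x \<in> B' - {\<alpha>}" "s x = x"
      then show "s = \<one>" using free[of s x] B'\<Omega> by blast
    qed
  qed
  have "card (\<Omega> - {\<alpha>}) = 63" using card\<Omega> a\<Omega> fin\<Omega> by simp
  then have d1': "card Ka dvd 63" using d1 by simp
  have "card (B' - {\<alpha>}) = card B - 1" using B'(2,3) by simp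
  then have d2': "card Ka dvd card B - 1" using d2 by simp
  have d3: "card B dvd 64" using U(3) B'(3) by simp
  have "card Ka = 1 \<or> card Ka = 3 \<or> card Ka = 7"
    by (rule arith1[OF d3 _ c2 d1' d2']) (use c1 in simp)
  then show "card Ka = 3 \<or> card Ka = 7" using Ka_card_ge2 by auto
qed

lemma Ka_cyclic:
  assumes "card Ka = 3 \<or> card Ka = 7"
  shows "\<exists>g\<in>Ka. ord g = card Ka \<and> generate G {g} = Ka"
proof -
  obtain g where g: "g \<in> Ka" "g \<noteq> \<one>" using Kant one_Ka by blast
  have gc: "g \<in> carrier G" using Kac[OF g(1)] .
  have gs: "generate G {g} \<subseteq> Ka" using g(1) by (intro generate_subgroup_incl[OF _ Ka_sub]) simp
  have "card (generate G {g}) dvd card Ka"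
    by (rule sub_dvd[OF generate_is_subgroup Ka_sub gs]) (simp add: gc)
  then have "ord g dvd card Ka" using generate_pow_card[OF gc] by simp
  moreover have "ord g \<noteq> 1" using ord_eq_1[OF gc] g(2) by simp
  moreover have "Factorial_Ring.prime (card Ka)" using assms by auto
  ultimately have o: "ord g = card Ka" using prime_nat_iff by blast
  then have "card (generate G {g}) = card Ka" using generate_pow_card[OF gc] by simp
  then have "generate G {g} = Ka" using card_subset_eq[OF Ka_fin gs] by simp
  then show ?thesis using o g(1) by blast
qed


lemma Ha_63: "63 dvd card Ha"
proof -
  obtain \<beta>0 where b0: "\<beta>0 \<in> \<Omega>" "\<beta>0 \<noteq> \<alpha>"
  proof -
    have "card (\<Omega> - {\<alpha>}) = 63" using card\<Omega> a\<Omega> fin\<Omega> by simp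
    then have "\<Omega> - {\<alpha>} \<noteq> {}" by (metis card.empty zero_neq_numeral)
    then show ?thesis using that by blast
  qed
  define T where "T = pstab Ha \<beta>0"
  have T: "subgroup T G" unfolding T_def by (rule pstab_subgroup[OF Ha_sub b0(1)])
  have TS: "T \<subseteq> Ha" unfolding T_def pstab_def by blast
  have f: "(h \<beta>0 = h' \<beta>0) \<longleftrightarrow> inv h \<otimes> h' \<in> T" if h: "h \<in> Ha" "h' \<in> Ha" for h h'
  proof -
    have hc: "h \<in> carrier G" "h' \<in> carrier G" using Hac h by auto
    have e: "(inv h \<otimes> h') \<beta>0 = (inv h) (h' \<beta>0)" by (rule mult_apply[OF inv_closed[OF hc(1)] hc(2) b0(1)])
    have m: "inv h \<otimes> h' \<in> Ha" using sgM[OF Ha_sub sgI[OF Ha_sub h(1)] h(2)] .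
    show ?thesis
    proof
      assume "h \<beta>0 = h' \<beta>0"
      then have "(inv h \<otimes> h') \<beta>0 = \<beta>0" using e inv_apply1[OF hc(1) b0(1)] by simp
      then show "inv h \<otimes> h' \<in> T" using m unfolding T_def pstab_def by blast
    next
      assume "inv h \<otimes> h' \<in> T"
      then have "(inv h) (h' \<beta>0) = \<beta>0" using e unfolding T_def pstab_def by simp
      then have "h ((inv h) (h' \<beta>0)) = h \<beta>0" by simp
      then show "h \<beta>0 = h' \<beta>0" using inv_apply2[OF hc(1) in_Omega[OF hc(2) b0(1)]] by simp
    qed
  qed
  have img: "(\<lambda>h. h \<beta>0) ` Ha = \<Omega> - {\<alpha>}"
  proof
    show "(\<lambda>h. h \<beta>0) ` Ha \<subseteq> \<Omega> - {\<alpha>}"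
    proof
      fix x assume "x \<in> (\<lambda>h. h \<beta>0) ` Ha"
      then obtain h where h: "h \<in> Ha" "x = h \<beta>0" by blast
      have hc: "h \<in> carrier G" using Hac[OF h(1)] .
      have "h \<beta>0 \<noteq> h \<alpha>" using inj_Omega[OF hc] b0 a\<Omega> by (metis inj_onD)
      then show "x \<in> \<Omega> - {\<alpha>}" using h Hafix[OF h(1)] in_Omega[OF hc b0(1)] by simp
    qed
    show "\<Omega> - {\<alpha>} \<subseteq> (\<lambda>h. h \<beta>0) ` Ha"
    proof
      fix x assume x: "x \<in> \<Omega> - {\<alpha>}"
      obtain h where "h \<in> Ha" "h \<beta>0 = x" using Ha_trans[OF b0, of x] x by blast
      then show "x \<in> (\<lambda>h. h \<beta>0) ` Ha" by blast
    qed
  qed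
  have "card Ha = card ((\<lambda>h. h \<beta>0) ` Ha) * card T" by (rule fiber_card[OF Ha_sub T TS f])
  then have "card Ha = 63 * card T" using img card\<Omega> a\<Omega> fin\<Omega> by simp
  then show ?thesis by simp
qed

lemma centr_sub:
  assumes gc: "g \<in> carrier G"
  shows "subgroup {h \<in> Ha. h \<otimes> g = g \<otimes> h} G"
proof (rule subgroupI)
  show "{h \<in> Ha. h \<otimes> g = g \<otimes> h} \<subseteq> carrier G" using Hac by blast
  show "{h \<in> Ha. h \<otimes> g = g \<otimes> h} \<noteq> {}" using sg1[OF Ha_sub] gc by auto
  fix a b assume a: "a \<in> {h \<in> Ha. h \<otimes> g = g \<otimes> h}" and b: "b \<in> {h \<in> Ha. h \<otimes> g = g \<otimes> h}"
  have ac: "a \<in> carrier G" and bc: "b \<in> carrier G" using a b Hac by auto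
  have ea: "a \<otimes> g = g \<otimes> a" and eb: "b \<otimes> g = g \<otimes> b" using a b by auto
  have "inv a \<otimes> g = inv a \<otimes> (g \<otimes> a) \<otimes> inv a" using ac gc by (simp add: m_assoc)
  also have "\<dots> = inv a \<otimes> (a \<otimes> g) \<otimes> inv a" using ea by simp
  also have "\<dots> = g \<otimes> inv a" using ac gc by (simp add: m_assoc[symmetric])
  finally have "inv a \<otimes> g = g \<otimes> inv a" .
  then show "inv a \<in> {h \<in> Ha. h \<otimes> g = g \<otimes> h}" using sgI[OF Ha_sub] a by blast
  have "a \<otimes> b \<otimes> g = a \<otimes> (b \<otimes> g)" using ac bc gc by (simp add: m_assoc)
  also have "\<dots> = (a \<otimes> g) \<otimes> b" using eb ac bc gc by (simp add: m_assoc)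
  also have "\<dots> = g \<otimes> (a \<otimes> b)" using ea ac bc gc by (simp add: m_assoc)
  finally show "a \<otimes> b \<in> {h \<in> Ha. h \<otimes> g = g \<otimes> h}" using sgM[OF Ha_sub] a b by blast
qed

lemma cj_eq_comm: "x \<in> carrier G \<Longrightarrow> g \<in> carrier G \<Longrightarrow> cj x g = g \<longleftrightarrow> x \<otimes> g = g \<otimes> x"
proof
  assume c: "x \<in> carrier G" "g \<in> carrier G" and e: "cj x g = g"
  have "x \<otimes> g = cj x g \<otimes> x" unfolding cj_def using c by (simp add: m_assoc)
  then show "x \<otimes> g = g \<otimes> x" using e by simp
next
  assume c: "x \<in> carrier G" "g \<in> carrier G" and e: "x \<otimes> g = g \<otimes> x"
  show "cj x g = g" unfolding cj_def using e c by (simp add: m_assoc)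
qed

lemma exists_q:
  assumes g: "g \<in> Ka" "g \<noteq> \<one>" and kk: "card Ka = 3 \<or> card Ka = 7"
  shows "\<exists>y\<in>Ha. y \<otimes> g = g \<otimes> y \<and> ord y = 21 div card Ka"
proof -
  define C where "C = {h \<in> Ha. h \<otimes> g = g \<otimes> h}"
  have gc: "g \<in> carrier G" using Kac[OF g(1)] .
  have C: "subgroup C G" unfolding C_def by (rule centr_sub[OF gc])
  have CS: "C \<subseteq> Ha" unfolding C_def by blast
  have f: "(cj h g = cj h' g) \<longleftrightarrow> inv h \<otimes> h' \<in> C" if h: "h \<in> Ha" "h' \<in> Ha" for h h'
  proof -
    have hc: "h \<in> carrier G" "h' \<in> carrier G" using Hac h by auto
    have m: "inv h \<otimes> h' \<in> Ha" using sgM[OF Ha_sub sgI[OF Ha_sub h(1)] h(2)] .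
    have "(cj h g = cj h' g) \<longleftrightarrow> cj (inv h) (cj h g) = cj (inv h) (cj h' g)"
      using cj_inj[OF inv_closed[OF hc(1)]] cj_closed hc gc by metis
    also have "\<dots> \<longleftrightarrow> g = cj (inv h \<otimes> h') g" using cj_back[OF hc(1) gc] cj_cj[OF inv_closed[OF hc(1)] hc(2) gc] by simp
    also have "\<dots> \<longleftrightarrow> (inv h \<otimes> h') \<otimes> g = g \<otimes> (inv h \<otimes> h')"
      using cj_eq_comm[OF m_closed[OF inv_closed[OF hc(1)] hc(2)] gc] by auto
    finally show ?thesis unfolding C_def using m by blast
  qed
  have img: "(\<lambda>h. cj h g) ` Ha \<subseteq> Ka - {\<one>}"
  proof
    fix x assume "x \<in> (\<lambda>h. cj h g) ` Ha"
    then obtain h where h: "h \<in> Ha" "x = cj h g" by blast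
    have hc: "h \<in> carrier G" using Hac[OF h(1)] .
    have "cj h g \<in> Ka" using Ka_conj[OF h(1) g(1)] unfolding cj_def .
    moreover have "cj h g \<noteq> \<one>" using cj_inj[OF hc gc one_closed] cj_one[OF hc] g(2) by auto
    ultimately show "x \<in> Ka - {\<one>}" using h(2) by simp
  qed
  have cimg: "card ((\<lambda>h. cj h g) ` Ha) \<le> card Ka - 1"
    using card_mono[OF _ img] Ka_fin one_Ka by simp
  have cimg1: "card ((\<lambda>h. cj h g) ` Ha) \<ge> 1"
  proof -
    have "Ha \<noteq> {}" using sg1[OF Ha_sub] by blast
    moreover have "finite ((\<lambda>h. cj h g) ` Ha)" using finite_subset[OF img] Ka_fin by blast
    ultimately show ?thesis by (simp add: Suc_le_eq card_gt_0_iff)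
  qed
  have eq: "card Ha = card ((\<lambda>h. cj h g) ` Ha) * card C" by (rule fiber_card[OF Ha_sub C CS f])
  obtain t where t: "card Ha = 63 * t" using Ha_63 by blast
  have ar: "(card Ka = 3 \<longrightarrow> 7 dvd card C) \<and> (card Ka = 7 \<longrightarrow> 3 dvd card C)"
    by (rule arith4[OF t eq cimg1 cimg kk])
  have "Factorial_Ring.prime (21 div card Ka)" "21 div card Ka dvd card C"
    using kk ar by auto
  then obtain y where y: "y \<in> C" "ord y = 21 div card Ka" using cauchy[OF C] by blast
  then show ?thesis unfolding C_def by blast
qed


lemma gen_insert_z:
  assumes g: "g \<in> Ka" "ord g = card Ka" "generate G {g} = Ka" and y: "y \<in> carrier G" "y \<otimes> g = g \<otimes> y"
    "ord y = 21 div card Ka" and kk: "card Ka = 3 \<or> card Ka = 7"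
  shows "ord (g \<otimes> y) = 21" "generate G (insert y Ka) = generate G {g \<otimes> y}"
proof -
  define z where "z = g \<otimes> y"
  have gc: "g \<in> carrier G" using Kac[OF g(1)] .
  have eq: "g \<otimes> y = y \<otimes> g" using y(2) by simp
  have zc: "z \<in> carrier G" unfolding z_def using gc y(1) by simp
  have zp: "\<And>n. z [^] (n::nat) = g [^] n \<otimes> y [^] n" unfolding z_def by (rule pow_mult_distrib[OF eq gc y(1)])
  have d21: "ord z dvd 21"
  proof -
    have "ord z dvd ord g * ord y" unfolding z_def by (rule ord_mul_divides[OF eq gc y(1)])
    then show ?thesis using g(2) y(3) kk by auto
  qed
  have nk: "z [^] card Ka \<noteq> \<one>"
  proof
    assume "z [^] card Ka = \<one>"
    then have "y [^] card Ka = \<one>" using zp g(2) gc y(1) by (simp add: pow_ord_eq_1[OF gc, unfolded g(2)])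
    then have "ord y dvd card Ka" using pow_eq_id[OF y(1)] by simp
    then show False using y(3) kk by auto
  qed
  have nq: "z [^] (21 div card Ka) \<noteq> \<one>"
  proof
    assume "z [^] (21 div card Ka) = \<one>"
    then have "g [^] (21 div card Ka) = \<one>" using zp y(3) gc y(1) by (simp add: pow_ord_eq_1[OF y(1), unfolded y(3)])
    then have "ord g dvd 21 div card Ka" using pow_eq_id[OF gc] by simp
    then show False using g(2) kk by auto
  qed
  have oz: "ord z = 21"
  proof (rule div21[OF d21])
    have n3: "z [^] (3::nat) \<noteq> \<one>" using nk nq kk by (elim disjE) simp_all
    have n7: "z [^] (7::nat) \<noteq> \<one>" using nk nq kk by (elim disjE) simp_all
    show "\<not> ord z dvd 3" using n3 pow_eq_id[OF zc, of 3] by simp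
    show "\<not> ord z dvd 7" using n7 pow_eq_id[OF zc, of 7] by simp
  qed
  then show "ord (g \<otimes> y) = 21" unfolding z_def .
  have Gz: "generate G {z} = {z [^] k | k. k \<in> (UNIV :: nat set)}"
    by (rule generate_pow_nat[OF zc]) (simp add: oz)
  have zsub: "subgroup (generate G {z}) G" by (rule generate_is_subgroup) (simp add: zc)
  have gy: "g \<in> generate G {z} \<and> y \<in> generate G {z}"
  proof (cases "card Ka = 3")
    case True
    then have og: "ord g = 3" and oy: "ord y = 7" using g(2) y(3) by auto
    have "z [^] (15::nat) = g [^] (ord g * 5) \<otimes> y [^] (ord y * 2 + 1)" using zp og oy by simp
    then have "z [^] (15::nat) = y" using gc y(1) by (simp only: pow_ord_mult pow_ord_mult_plus) simp
    moreover have "z [^] (7::nat) = g [^] (ord g * 2 + 1) \<otimes> y [^] (ord y * 1)" using zp og oy by simp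
    then have "z [^] (7::nat) = g" using gc y(1) by (simp only: pow_ord_mult pow_ord_mult_plus) simp
    ultimately show ?thesis unfolding Gz by (metis (mono_tags, lifting) UNIV_I mem_Collect_eq)
  next
    case False
    then have og: "ord g = 7" and oy: "ord y = 3" using g(2) y(3) kk by auto
    have "z [^] (7::nat) = g [^] (ord g * 1) \<otimes> y [^] (ord y * 2 + 1)" using zp og oy by simp
    then have "z [^] (7::nat) = y" using gc y(1) by (simp only: pow_ord_mult pow_ord_mult_plus) simp
    moreover have "z [^] (15::nat) = g [^] (ord g * 2 + 1) \<otimes> y [^] (ord y * 5)" using zp og oy by simp
    then have "z [^] (15::nat) = g" using gc y(1) by (simp only: pow_ord_mult pow_ord_mult_plus) simp
    ultimately show ?thesis unfolding Gz by (metis (mono_tags, lifting) UNIV_I mem_Collect_eq)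
  qed
  have Kaz: "Ka \<subseteq> generate G {z}"
    using generate_subgroup_incl[OF _ zsub, of "{g}"] gy g(3) by simp
  have ins: "insert y Ka \<subseteq> carrier G" using y(1) Kac by blast
  have xsub: "subgroup (generate G (insert y Ka)) G" by (rule generate_is_subgroup[OF ins])
  have "generate G (insert y Ka) \<subseteq> generate G {z}"
    by (rule generate_subgroup_incl[OF _ zsub]) (use Kaz gy in blast)
  moreover have "generate G {z} \<subseteq> generate G (insert y Ka)"
  proof (rule generate_subgroup_incl[OF _ xsub])
    have "g \<in> generate G (insert y Ka)" using g(1) by (intro generate.incl) simp
    moreover have "y \<in> generate G (insert y Ka)" by (intro generate.incl) simp
    ultimately have "g \<otimes> y \<in> generate G (insert y Ka)" by (rule sgM[OF xsub])
    then show "{z} \<subseteq> generate G (insert y Ka)" unfolding z_def by simp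
  qed
  ultimately show "generate G (insert y Ka) = generate G {g \<otimes> y}" unfolding z_def by blast
qed

lemma part1b:
  assumes kk: "card Ka = 3 \<or> card Ka = 7"
  shows "\<exists>x\<in>Ha. G\<lparr>carrier := generate G (insert x Ka)\<rparr> \<cong> integer_mod_group 21"
proof -
  obtain g where g: "g \<in> Ka" "ord g = card Ka" "generate G {g} = Ka" using Ka_cyclic[OF kk] by blast
  have gc: "g \<in> carrier G" using Kac[OF g(1)] .
  have "g \<noteq> \<one>" using g(2) kk ord_eq_1[OF gc] by auto
  then obtain y where y: "y \<in> Ha" "y \<otimes> g = g \<otimes> y" "ord y = 21 div card Ka" using exists_q[OF g(1) _ kk] by blast
  note r = gen_insert_z[OF g Hac[OF y(1)] y(2,3) kk]
  have "G\<lparr>carrier := generate G {g \<otimes> y}\<rparr> \<cong> integer_mod_group 21"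
    by (rule cyclic_iso) (use r gc Hac[OF y(1)] in auto)
  then have "G\<lparr>carrier := generate G (insert y Ka)\<rparr> \<cong> integer_mod_group 21" using r(2) by simp
  then show ?thesis using y(1) by blast
qed


lemma cjH_fix_iff: assumes h: "h \<in> Ha" and n: "n \<in> N" shows "cj h n = n \<longleftrightarrow> h (n \<alpha>) = n \<alpha>"
proof -
  have e: "cj h n \<alpha> = h (n \<alpha>)" using cj_apply_fix[OF Hac[OF h] Nc[OF n] a\<Omega> Hafix[OF h]] .
  have "cj h n \<in> N" using cjN[OF HaH[OF h] n] .
  then show ?thesis using e Nreg2 n by metis
qed

lemma fix_dvd:
  assumes s: "s \<in> Ha"
  shows "card {\<beta> \<in> \<Omega>. s \<beta> = \<beta>} dvd 64"
proof -
  define CN where "CN = {n \<in> N. cj s n = n}"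
  have sc: "s \<in> carrier G" using Hac[OF s] .
  have sub: "subgroup CN G"
  proof (rule subgroupI)
    show "CN \<subseteq> carrier G" unfolding CN_def using Nc by blast
    have "cj s \<one> = \<one>" by (rule cj_one[OF sc])
    then show "CN \<noteq> {}" unfolding CN_def using sg1[OF N] by blast
    fix a b assume a: "a \<in> CN" and b: "b \<in> CN"
    have aN: "a \<in> N" "cj s a = a" and bN: "b \<in> N" "cj s b = b" using a b unfolding CN_def by auto
    have "cj s (inv a) = inv a" using cj_inv[OF sc Nc[OF aN(1)]] aN(2) by simp
    then show "inv a \<in> CN" unfolding CN_def using sgI[OF N aN(1)] by simp
    have "cj s (a \<otimes> b) = a \<otimes> b" using cj_mult[OF sc Nc[OF aN(1)] Nc[OF bN(1)]] aN(2) bN(2) by simp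
    then show "a \<otimes> b \<in> CN" unfolding CN_def using sgM[OF N aN(1) bN(1)] by simp
  qed
  have "bij_betw (\<lambda>n. n \<alpha>) CN {\<beta> \<in> \<Omega>. s \<beta> = \<beta>}"
    unfolding bij_betw_def
  proof
    show "inj_on (\<lambda>n. n \<alpha>) CN" unfolding CN_def using Nreg2 by (auto intro: inj_onI)
    show "(\<lambda>n. n \<alpha>) ` CN = {\<beta> \<in> \<Omega>. s \<beta> = \<beta>}"
    proof
      show "(\<lambda>n. n \<alpha>) ` CN \<subseteq> {\<beta> \<in> \<Omega>. s \<beta> = \<beta>}"
      proof
        fix b assume "b \<in> (\<lambda>n. n \<alpha>) ` CN"
        then obtain n where n: "n \<in> N" "cj s n = n" "b = n \<alpha>" unfolding CN_def by blast
        have "s (n \<alpha>) = n \<alpha>" using cjH_fix_iff[OF s n(1)] n(2) by simp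
        then show "b \<in> {\<beta> \<in> \<Omega>. s \<beta> = \<beta>}" using n(3) in_Omega[OF Nc[OF n(1)] a\<Omega>] by simp
      qed
      show "{\<beta> \<in> \<Omega>. s \<beta> = \<beta>} \<subseteq> (\<lambda>n. n \<alpha>) ` CN"
      proof
        fix b assume b: "b \<in> {\<beta> \<in> \<Omega>. s \<beta> = \<beta>}"
        then obtain n where n: "n \<in> N" "n \<alpha> = b" using Ntr by blast
        have "cj s n = n" using cjH_fix_iff[OF s n(1)] n(2) b by simp
        then show "b \<in> (\<lambda>n. n \<alpha>) ` CN" unfolding CN_def using n by blast
      qed
    qed
  qed
  then have "card CN = card {\<beta> \<in> \<Omega>. s \<beta> = \<beta>}" by (rule bij_betw_same_card)
  moreover have "card CN dvd card N" by (rule sub_dvd[OF sub N]) (auto simp: CN_def)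
  ultimately show ?thesis using cardN by simp
qed

lemma gen_comm: "s \<in> carrier G \<Longrightarrow> d \<in> generate G {s} \<Longrightarrow> d \<otimes> s = s \<otimes> d"
proof -
  assume sc: "s \<in> carrier G" and d: "d \<in> generate G {s}"
  obtain i where i: "d = s [^] (i::nat)" using gen_pow[OF sc d] by blast
  have e1: "s [^] Suc i = s [^] i \<otimes> s" by (rule nat_pow_Suc)
  have e2: "s [^] Suc i = s \<otimes> s [^] i" by (rule nat_pow_Suc2[OF sc])
  show ?thesis unfolding i using e1 e2 by metis
qed

lemma part2_fix:
  assumes free: "\<And>k \<beta>. k \<in> Ka \<Longrightarrow> \<beta> \<in> \<Omega> \<Longrightarrow> \<beta> \<noteq> \<alpha> \<Longrightarrow> k \<beta> = \<beta> \<Longrightarrow> k = \<one>"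
    and kq: "(card Ka = 3 \<and> q = 7) \<or> (card Ka = 7 \<and> (q::nat) = 3)"
    and s: "s \<in> Ha" "s \<noteq> \<one>" "s [^] q = \<one>" and comm: "\<And>k. k \<in> Ka \<Longrightarrow> s \<otimes> k = k \<otimes> s"
  shows "{\<beta> \<in> \<Omega>. s \<beta> = \<beta>} = {\<alpha>}"
proof -
  define F where "F = {\<beta> \<in> \<Omega>. s \<beta> = \<beta>}"
  have sc: "s \<in> carrier G" using Hac[OF s(1)] .
  have aF: "\<alpha> \<in> F" unfolding F_def using a\<Omega> Hafix[OF s(1)] by simp
  have F\<Omega>: "F \<subseteq> \<Omega>" unfolding F_def by blast
  have finF: "finite F" using F\<Omega> fin\<Omega> finite_subset by blast
  have pq: "Factorial_Ring.prime q" using kq by auto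
  have os: "ord s = q"
  proof -
    have "ord s dvd q" using pow_eq_id[OF sc] s(3) by simp
    moreover have "ord s \<noteq> 1" using ord_eq_1[OF sc] s(2) by simp
    ultimately show ?thesis using pq prime_nat_iff by blast
  qed
  have d1: "card Ka dvd card (F - {\<alpha>})"
  proof (rule free_dvd[OF Ka_sub])
    show "F - {\<alpha>} \<subseteq> \<Omega>" using F\<Omega> by blast
    show "\<And>k x. k \<in> Ka \<Longrightarrow> x \<in> F - {\<alpha>} \<Longrightarrow> k x \<in> F - {\<alpha>}"
    proof -
      fix k x assume k: "k \<in> Ka" and x: "x \<in> F - {\<alpha>}"
      have x\<Omega>: "x \<in> \<Omega>" "s x = x" "x \<noteq> \<alpha>" using x unfolding F_def by auto
      have "s (k x) = (s \<otimes> k) x" using mult_apply[OF sc Kac[OF k] x\<Omega>(1)] by simp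
      also have "\<dots> = (k \<otimes> s) x" using comm[OF k] by simp
      also have "\<dots> = k x" using mult_apply[OF Kac[OF k] sc x\<Omega>(1)] x\<Omega>(2) by simp
      finally have "s (k x) = k x" .
      then show "k x \<in> F - {\<alpha>}" using Ka_maps[OF k x\<Omega>(1) x\<Omega>(3)] unfolding F_def by simp
    qed
    show "\<And>k x. k \<in> Ka \<Longrightarrow> x \<in> F - {\<alpha>} \<Longrightarrow> k x = x \<Longrightarrow> k = \<one>"
    proof -
      fix k x assume "k \<in> Ka" "x \<in> F - {\<alpha>}" "k x = x"
      then show "k = \<one>" using free[of k x] unfolding F_def by blast
    qed
  qed
  have gsub: "subgroup (generate G {s}) G" by (rule generate_is_subgroup) (simp add: sc)
  have cg: "card (generate G {s}) = q" using generate_pow_card[OF sc] os by simp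
  have d2: "card (generate G {s}) dvd card (\<Omega> - F)"
  proof (rule free_dvd[OF gsub])
    show "\<Omega> - F \<subseteq> \<Omega>" by blast
    show "\<And>d x. d \<in> generate G {s} \<Longrightarrow> x \<in> \<Omega> - F \<Longrightarrow> d x \<in> \<Omega> - F"
    proof -
      fix d x assume d: "d \<in> generate G {s}" and x: "x \<in> \<Omega> - F"
      have dc: "d \<in> carrier G" using sgC[OF gsub d] .
      have x\<Omega>: "x \<in> \<Omega>" "s x \<noteq> x" using x unfolding F_def by auto
      have "s (d x) = (s \<otimes> d) x" using mult_apply[OF sc dc x\<Omega>(1)] by simp
      also have "\<dots> = (d \<otimes> s) x" using gen_comm[OF sc d] by simp
      also have "\<dots> = d (s x)" using mult_apply[OF dc sc x\<Omega>(1)] by simp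
      finally have e: "s (d x) = d (s x)" .
      have "d (s x) \<noteq> d x" using inj_Omega[OF dc] x\<Omega> in_Omega[OF sc x\<Omega>(1)] by (metis inj_onD)
      then show "d x \<in> \<Omega> - F" using e in_Omega[OF dc x\<Omega>(1)] unfolding F_def by simp
    qed
    show "\<And>d x. d \<in> generate G {s} \<Longrightarrow> x \<in> \<Omega> - F \<Longrightarrow> d x = x \<Longrightarrow> d = \<one>"
    proof (rule ccontr)
      fix d x assume d: "d \<in> generate G {s}" and x: "x \<in> \<Omega> - F" and dx: "d x = x" and dn: "d \<noteq> \<one>"
      have dc: "d \<in> carrier G" using sgC[OF gsub d] .
      have x\<Omega>: "x \<in> \<Omega>" "s x \<noteq> x" using x unfolding F_def by auto
      have gd: "generate G {d} \<subseteq> generate G {s}" by (rule generate_subgroup_incl[OF _ gsub]) (use d in simp)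
      have "card (generate G {d}) dvd card (generate G {s})"
        by (rule sub_dvd[OF generate_is_subgroup gsub gd]) (simp add: dc)
      then have "ord d dvd q" using generate_pow_card[OF dc] cg by simp
      moreover have "ord d \<noteq> 1" using ord_eq_1[OF dc] dn by simp
      ultimately have "ord d = q" using pq prime_nat_iff by blast
      then have "card (generate G {d}) = card (generate G {s})" using generate_pow_card[OF dc] cg by simp
      then have "generate G {d} = generate G {s}"
        using card_subset_eq[OF fin_sub[OF subgroup.subset[OF gsub]] gd] by simp
      moreover have "s \<in> generate G {s}" by (intro generate.incl) simp
      ultimately have "s \<in> generate G {d}" by simp
      then obtain j where "s = d [^] (j::nat)" using gen_pow[OF dc] by blast
      then have "s x = x" using pow_fix[OF dc x\<Omega>(1) dx] by simp
      then show False using x\<Omega>(2) by simp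
    qed
  qed
  have cF: "card (\<Omega> - F) = 64 - card F" using card_Diff_subset[OF finF F\<Omega>] card\<Omega> by simp
  have cFa: "card (F - {\<alpha>}) = card F - 1" using aF by simp
  have "card F = 1 \<or> card F = 64"
    by (rule arith2[OF fix_dvd[OF s(1), folded F_def]]) (use d1 d2 cF cFa cg kq in auto)
  moreover have "card F \<noteq> 64"
  proof
    assume "card F = 64"
    then have "F = \<Omega>" using card_subset_eq[OF fin\<Omega> F\<Omega>] card\<Omega> by simp
    then have "s = \<one>" using fix_all_one[OF sc] unfolding F_def by blast
    then show False using s(2) by simp
  qed
  ultimately have "card F = 1" by simp
  then show ?thesis using aF unfolding F_def[symmetric] by (metis card_1_singletonE singletonD)
qed


lemma Ha_maps: "h \<in> Ha \<Longrightarrow> x \<in> \<Omega> \<Longrightarrow> x \<noteq> \<alpha> \<Longrightarrow> h x \<in> \<Omega> \<and> h x \<noteq> \<alpha>"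
proof -
  assume h: "h \<in> Ha" and x: "x \<in> \<Omega>" "x \<noteq> \<alpha>"
  have hc: "h \<in> carrier G" using Hac[OF h] .
  have "h x \<noteq> h \<alpha>" using inj_Omega[OF hc] x a\<Omega> by (metis inj_onD)
  then show ?thesis using Hafix[OF h] in_Omega[OF hc x(1)] by simp
qed

lemma part2:
  assumes free: "\<And>k \<beta>. k \<in> Ka \<Longrightarrow> \<beta> \<in> \<Omega> \<Longrightarrow> \<beta> \<noteq> \<alpha> \<Longrightarrow> k \<beta> = \<beta> \<Longrightarrow> k = \<one>"
    and kk: "card Ka = 3 \<or> card Ka = 7" and x: "x \<in> Ha"
    and iso: "G\<lparr>carrier := generate G (insert x Ka)\<rparr> \<cong> integer_mod_group 21"
  shows "primitive_on \<Omega> (generate G (insert x K))"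
proof -
  define L where "L = generate G (insert x Ka)"
  have KaHa: "Ka \<subseteq> Ha" using KH unfolding pstab_def by blast
  have insL: "insert x Ka \<subseteq> Ha" using x KaHa by blast
  have Lsub: "subgroup L G" unfolding L_def by (rule generate_is_subgroup) (use insL Hac in blast)
  have LHa: "L \<subseteq> Ha" unfolding L_def by (rule generate_subgroup_incl[OF insL Ha_sub])
  note facts = iso21_facts[OF Lsub iso[folded L_def]]
  have KaL: "Ka \<subseteq> L" unfolding L_def by (auto intro: generate.incl)
  define q where "q = 21 div card Ka"
  have kq: "(card Ka = 3 \<and> q = 7) \<or> (card Ka = 7 \<and> q = 3)" using kk unfolding q_def by auto
  have Ka_eq: "Ka = {l \<in> L. l [^] card Ka = \<one>}"
  proof (rule card_subset_eq)
    show "finite {l \<in> L. l [^] card Ka = \<one>}" using fin_sub[OF subgroup.subset[OF Lsub]] by simp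
    show "Ka \<subseteq> {l \<in> L. l [^] card Ka = \<one>}"
    proof
      fix k assume k: "k \<in> Ka"
      have "ord k dvd card Ka" by (rule ord_dvd_sub[OF Ka_sub k])
      then have "k [^] card Ka = \<one>" using pow_eq_id[OF Kac[OF k]] by simp
      then show "k \<in> {l \<in> L. l [^] card Ka = \<one>}" using k KaL by blast
    qed
    show "card Ka = card {l \<in> L. l [^] card Ka = \<one>}" using facts(3)[OF kk] by simp
  qed
  have Lfree: "l = \<one>" if l: "l \<in> L" "\<beta> \<in> \<Omega>" "\<beta> \<noteq> \<alpha>" "l \<beta> = \<beta>" for l \<beta>
  proof -
    have lc: "l \<in> carrier G" using sgC[OF Lsub l(1)] .
    define t where "t = l [^] q"
    have tL: "t \<in> L" unfolding t_def by (rule sg_pow[OF Lsub l(1)])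
    have "ord l dvd 21" using ord_dvd_sub[OF Lsub l(1)] facts(1) by simp
    then have l21: "l [^] (21::nat) = \<one>" using pow_eq_id[OF lc] by simp
    have "t [^] card Ka = l [^] (q * card Ka)" unfolding t_def using lc by (simp add: nat_pow_pow)
    also have "q * card Ka = 21" using kq by auto
    finally have "t [^] card Ka = \<one>" using l21 by simp
    then have tKa: "t \<in> Ka" using tL Ka_eq by blast
    have "t \<beta> = \<beta>" unfolding t_def by (rule pow_fix[OF lc l(2) l(4)])
    then have "t = \<one>" using free[OF tKa l(2,3)] by simp
    then have lq: "l [^] q = \<one>" unfolding t_def .
    show "l = \<one>"
    proof (rule ccontr)
      assume ln: "l \<noteq> \<one>"
      have comm: "\<And>k. k \<in> Ka \<Longrightarrow> l \<otimes> k = k \<otimes> l" using facts(2) l(1) KaL by blast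
      have "{\<beta> \<in> \<Omega>. l \<beta> = \<beta>} = {\<alpha>}"
        by (rule part2_fix[OF free kq subsetD[OF LHa l(1)] ln lq comm])
      then show False using l(2,3,4) by blast
    qed
  qed
  define G' where "G' = generate G (insert x K)"
  have ins': "insert x K \<subseteq> carrier G" using Hac[OF x] Kc by blast
  have G'sub: "subgroup G' G" unfolding G'_def by (rule generate_is_subgroup[OF ins'])
  have KG': "K \<subseteq> G'" unfolding G'_def by (auto intro: generate.incl)
  have NG': "N \<subseteq> G'" using N_sub_K KG' by blast
  have LG': "L \<subseteq> G'" unfolding L_def
    by (rule generate_subgroup_incl[OF _ G'sub]) (use KG' x in \<open>auto simp: G'_def pstab_def intro: generate.incl\<close>)
  have trans: "transitive_on \<Omega> G'"
    unfolding transitive_on_def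
  proof (intro ballI)
    fix \<beta> \<gamma> assume b: "\<beta> \<in> \<Omega>" and c: "\<gamma> \<in> \<Omega>"
    obtain n1 where n1: "n1 \<in> N" "n1 \<alpha> = \<beta>" using Ntr[OF b] by blast
    obtain n2 where n2: "n2 \<in> N" "n2 \<alpha> = \<gamma>" using Ntr[OF c] by blast
    have c1: "n1 \<in> carrier G" "n2 \<in> carrier G" using Nc n1(1) n2(1) by auto
    have "(n2 \<otimes> inv n1) \<beta> = n2 ((inv n1) (n1 \<alpha>))" using mult_apply[OF c1(2) inv_closed[OF c1(1)] b] n1(2) by simp
    then have "(n2 \<otimes> inv n1) \<beta> = \<gamma>" using inv_apply1[OF c1(1) a\<Omega>] n2(2) by simp
    moreover have "n2 \<otimes> inv n1 \<in> G'" using sgM[OF N n2(1) sgI[OF N n1(1)]] NG' by blast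
    ultimately show "\<exists>g\<in>G'. g \<beta> = \<gamma>" by blast
  qed
  have blocks: "card B = 1 \<or> B = \<Omega>" if B: "is_block \<Omega> G' B" for B
  proof -
    obtain B' where B': "is_block \<Omega> G' B'" "\<alpha> \<in> B'" "card B' = card B"
      using block_translate[OF G'sub NG' B] by blast
    note U = block_U[OF G'sub NG' B'(1,2)]
    have B'\<Omega>: "B' \<subseteq> \<Omega>" using B'(1) unfolding is_block_def by auto
    have B\<Omega>: "B \<subseteq> \<Omega>" using B unfolding is_block_def by auto
    have "card L dvd card (B' - {\<alpha>})"
    proof (rule free_dvd[OF Lsub])
      show "B' - {\<alpha>} \<subseteq> \<Omega>" using B'\<Omega> by blast
      show "\<And>l y. l \<in> L \<Longrightarrow> y \<in> B' - {\<alpha>} \<Longrightarrow> l y \<in> B' - {\<alpha>}"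
      proof -
        fix l y assume l: "l \<in> L" and y: "y \<in> B' - {\<alpha>}"
        have lH: "l \<in> Ha" using l LHa by blast
        have lG: "l \<in> G'" using l LG' by (rule rev_subsetD)
        have yB: "y \<in> B'" using y by blast
        have "l y \<in> B'" by (rule U(4)[OF lG Hafix[OF lH] yB])
        moreover have "l y \<noteq> \<alpha>" using Ha_maps[OF lH] y B'\<Omega> by blast
        ultimately show "l y \<in> B' - {\<alpha>}" by blast
      qed
      show "\<And>l y. l \<in> L \<Longrightarrow> y \<in> B' - {\<alpha>} \<Longrightarrow> l y = y \<Longrightarrow> l = \<one>"
        using Lfree B'\<Omega> by blast
    qed
    then have "21 dvd card B' - 1" using facts(1) B'(2) by simp
    then have "card B' = 1 \<or> card B' = 64" using arith3 U(3) by blast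
    then show ?thesis
    proof
      assume "card B' = 1" then show ?thesis using B'(3) by simp
    next
      assume "card B' = 64"
      then have "card B = card \<Omega>" using B'(3) card\<Omega> by simp
      then show ?thesis using card_subset_eq[OF fin\<Omega> B\<Omega>] by simp
    qed
  qed
  show ?thesis unfolding primitive_on_def G'_def[symmetric] using trans blocks by blast
qed

end

lemma normal_conj:
  assumes H: "subgroup H (BijGroup \<Omega>)" and Nn: "N \<lhd> perm_gr \<Omega> H" and h: "h \<in> H" and n: "n \<in> N"
  shows "h \<otimes>\<^bsub>BijGroup \<Omega>\<^esub> n \<otimes>\<^bsub>BijGroup \<Omega>\<^esub> inv\<^bsub>BijGroup \<Omega>\<^esub> h \<in> N"
proof -
  interpret Gb: group "BijGroup \<Omega>" by (rule group_BijGroup)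
  have "h \<otimes>\<^bsub>perm_gr \<Omega> H\<^esub> n \<otimes>\<^bsub>perm_gr \<Omega> H\<^esub> inv\<^bsub>perm_gr \<Omega> H\<^esub> h \<in> N"
    by (rule normal.inv_op_closed2[OF Nn]) (use h n in \<open>simp_all add: perm_gr_def\<close>)
  moreover have "inv\<^bsub>perm_gr \<Omega> H\<^esub> h = inv\<^bsub>BijGroup \<Omega>\<^esub> h"
    unfolding perm_gr_def by (rule Gb.m_inv_consistent[OF H h])
  ultimately show ?thesis unfolding perm_gr_def by simp
qed

lemma normal_sub:
  assumes H: "subgroup H (BijGroup \<Omega>)" and Nn: "N \<lhd> perm_gr \<Omega> H"
  shows "subgroup N (BijGroup \<Omega>)" "N \<subseteq> H"
proof -
  interpret Gb: group "BijGroup \<Omega>" by (rule group_BijGroup)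
  have s: "subgroup N (perm_gr \<Omega> H)" using Nn by (rule normal_imp_subgroup)
  show "subgroup N (BijGroup \<Omega>)" using Gb.incl_subgroup[OF H] s unfolding perm_gr_def by blast
  show "N \<subseteq> H" using subgroup.subset[OF s] unfolding perm_gr_def by simp
qed

theorem lemma3p3:
  fixes \<Omega> :: "'a set" and H K :: "('a \<Rightarrow> 'a) set"
  assumes "affine_perm_group_2_6 \<Omega> H"
    and "two_transitive_on \<Omega> H"
    and "K \<lhd> perm_gr \<Omega> H"
    and "K \<noteq> {\<one>\<^bsub>BijGroup \<Omega>\<^esub>}"
    and "\<forall>\<alpha>\<in>\<Omega>. pstab K \<alpha> \<noteq> {\<one>\<^bsub>BijGroup \<Omega>\<^esub>}"
    and "imprimitive_on \<Omega> K"
  shows "\<forall>\<alpha>\<in>\<Omega>.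
      (\<exists>s\<in>{3,7}. perm_gr \<Omega> (pstab K \<alpha>) \<cong> integer_mod_group s)
    \<and> (\<exists>x\<in>pstab H \<alpha>. perm_gr \<Omega> (gen_perm \<Omega> (insert x (pstab K \<alpha>))) \<cong> integer_mod_group 21)
    \<and> (\<forall>x\<in>pstab H \<alpha>. perm_gr \<Omega> (gen_perm \<Omega> (insert x (pstab K \<alpha>))) \<cong> integer_mod_group 21
          \<longrightarrow> primitive_on \<Omega> (gen_perm \<Omega> (insert x K)))"
proof
  fix \<alpha> assume a: "\<alpha> \<in> \<Omega>"
  from assms(1) obtain N where fin: "finite \<Omega>" and card: "card \<Omega> = 64" and Hs: "subgroup H (BijGroup \<Omega>)"
    and Nn: "N \<lhd> perm_gr \<Omega> H" and reg: "regular_on \<Omega> N"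
    unfolding affine_perm_group_2_6_def perm_group_def by (auto simp del: One_nat_def)
  note Ns = normal_sub[OF Hs Nn] and Ks = normal_sub[OF Hs assms(3)]
  interpret M: main "BijGroup \<Omega>" \<Omega> H K N \<alpha>
  proof (intro main.intro pset.intro main_axioms.intro pset_axioms.intro)
    show "group (BijGroup \<Omega>)" by (rule group_BijGroup)
    show "BijGroup \<Omega> = BijGroup \<Omega>" ..
    show "finite \<Omega>" by fact
    show "subgroup H (BijGroup \<Omega>)" by fact
    show "subgroup N (BijGroup \<Omega>)" "N \<subseteq> H" by (rule Ns(1), rule Ns(2))
    show "\<And>h n. h \<in> H \<Longrightarrow> n \<in> N \<Longrightarrow> h \<otimes>\<^bsub>BijGroup \<Omega>\<^esub> n \<otimes>\<^bsub>BijGroup \<Omega>\<^esub> inv\<^bsub>BijGroup \<Omega>\<^esub> h \<in> N"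
      by (rule normal_conj[OF Hs Nn])
    show "\<And>\<beta>. \<beta> \<in> \<Omega> \<Longrightarrow> \<exists>n\<in>N. n \<alpha> = \<beta>"
      using reg a unfolding regular_on_def transitive_on_def by blast
    show "\<And>n. n \<in> N \<Longrightarrow> n \<alpha> = \<alpha> \<Longrightarrow> n = \<one>\<^bsub>BijGroup \<Omega>\<^esub>"
      using reg a unfolding regular_on_def pstab_def by blast
    show "\<alpha> \<in> \<Omega>" by fact
    show "card \<Omega> = 64" by fact
    show "subgroup K (BijGroup \<Omega>)" "K \<subseteq> H" by (rule Ks(1), rule Ks(2))
    show "\<And>h k. h \<in> H \<Longrightarrow> k \<in> K \<Longrightarrow> h \<otimes>\<^bsub>BijGroup \<Omega>\<^esub> k \<otimes>\<^bsub>BijGroup \<Omega>\<^esub> inv\<^bsub>BijGroup \<Omega>\<^esub> h \<in> K"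
      by (rule normal_conj[OF Hs assms(3)])
    show "\<And>\<beta> \<gamma>. \<beta> \<in> \<Omega> \<Longrightarrow> \<beta> \<noteq> \<alpha> \<Longrightarrow> \<gamma> \<in> \<Omega> \<Longrightarrow> \<gamma> \<noteq> \<alpha> \<Longrightarrow> \<exists>h\<in>H. h \<alpha> = \<alpha> \<and> h \<beta> = \<gamma>"
      using assms(2) a unfolding two_transitive_on_def by metis
    show "pstab K \<alpha> \<noteq> {\<one>\<^bsub>BijGroup \<Omega>\<^esub>}" using assms(5) a by blast
  qed
  note p1 = M.part1[OF assms(6)]
  obtain g where g: "g \<in> pstab K \<alpha>" "M.ord g = card (pstab K \<alpha>)" "generate (BijGroup \<Omega>) {g} = pstab K \<alpha>"
    using M.Ka_cyclic[OF p1(2)] by blast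
  have gc: "g \<in> carrier (BijGroup \<Omega>)" using M.Kac[OF g(1)] .
  have "BijGroup \<Omega>\<lparr>carrier := generate (BijGroup \<Omega>) {g}\<rparr> \<cong> integer_mod_group (M.ord g)"
    by (rule M.cyclic_iso[OF gc refl]) (use p1(2) g(2) in auto)
  then have "perm_gr \<Omega> (pstab K \<alpha>) \<cong> integer_mod_group (card (pstab K \<alpha>))"
    unfolding perm_gr_def using g(2,3) by simp
  then have c1: "\<exists>s\<in>{3,7}. perm_gr \<Omega> (pstab K \<alpha>) \<cong> integer_mod_group s" using p1(2) by auto
  have c2: "\<exists>x\<in>pstab H \<alpha>. perm_gr \<Omega> (gen_perm \<Omega> (insert x (pstab K \<alpha>))) \<cong> integer_mod_group 21"
    using M.part1b[OF p1(2)] unfolding perm_gr_def gen_perm_def by blast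
  have c3: "\<forall>x\<in>pstab H \<alpha>. perm_gr \<Omega> (gen_perm \<Omega> (insert x (pstab K \<alpha>))) \<cong> integer_mod_group 21
          \<longrightarrow> primitive_on \<Omega> (gen_perm \<Omega> (insert x K))"
  proof (intro ballI impI)
    fix x assume x: "x \<in> pstab H \<alpha>"
      and iso: "perm_gr \<Omega> (gen_perm \<Omega> (insert x (pstab K \<alpha>))) \<cong> integer_mod_group 21"
    have "primitive_on \<Omega> (generate (BijGroup \<Omega>) (insert x K))"
    proof (rule M.part2)
      show "\<And>k \<beta>. k \<in> pstab K \<alpha> \<Longrightarrow> \<beta> \<in> \<Omega> \<Longrightarrow> \<beta> \<noteq> \<alpha> \<Longrightarrow> k \<beta> = \<beta> \<Longrightarrow> k = \<one>\<^bsub>BijGroup \<Omega>\<^esub>"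
        by (rule p1(1))
      show "card (pstab K \<alpha>) = 3 \<or> card (pstab K \<alpha>) = 7" by (rule p1(2))
      show "x \<in> pstab H \<alpha>" by (rule x)
      show "BijGroup \<Omega>\<lparr>carrier := generate (BijGroup \<Omega>) (insert x (pstab K \<alpha>))\<rparr> \<cong> integer_mod_group 21"
        using iso unfolding perm_gr_def gen_perm_def .
    qed
    then show "primitive_on \<Omega> (gen_perm \<Omega> (insert x K))" unfolding gen_perm_def .
  qed
  show "(\<exists>s\<in>{3,7}. perm_gr \<Omega> (pstab K \<alpha>) \<cong> integer_mod_group s)
    \<and> (\<exists>x\<in>pstab H \<alpha>. perm_gr \<Omega> (gen_perm \<Omega> (insert x (pstab K \<alpha>))) \<cong> integer_mod_group 21)
    \<and> (\<forall>x\<in>pstab H \<alpha>. perm_gr \<Omega> (gen_perm \<Omega> (insert x (pstab K \<alpha>))) \<cong> integer_mod_group 21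
          \<longrightarrow> primitive_on \<Omega> (gen_perm \<Omega> (insert x K)))"
    using c1 c2 c3 by blast
qed

end
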